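(* Let $U:\mathbb{R}^n\to\mathbb{R}$, $\beta>0$, $G_h:\mathbb{R}^n\to\mathbb{R}^n$, $B_h:\mathbb{R}^n\to\mathbb{R}^{n\times n}$, $M_h=B_hB_h^T$, $B:\mathbb{R}^n\to\mathbb{R}^{n\times n}$. Assume: the first two derivatives of $U$ are bounded; $G_h$ and its first derivative are bounded for $h$ sufficiently small; $B_h$, its inverse, and its first and second derivatives are bounded for $h$ sufficiently small, and there is a bounded matrix-valued $C(x)$ with bounded first derivative such that $B_h(x)B_h(x)^T=B(x)B(x)^T+C(x)h^{1/2}$. Let $\alpha_h(X_0,\xi)$ be the acceptance probability and $\tilde\alpha_h(X_0,\xi)$ its approximation, as defined in the context. Then there is $C>0$ such that $$\mathbb{E}|\alpha_h(X_0,\xi)-\tilde\alpha_h(X_0,\xi)|\le Ch$$ for all $X_0\in\mathbb{R}^n$ (and $h$ sufficiently small).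
   Context: $\xi\in\mathbb{R}^n$ is Gaussian with mean zero and covariance $\beta^{-1}I$. Given $X_0$: $\tilde X_1=X_0+\sqrt{h/2}\,B_h(X_0)\xi$, $X_1^\star=\tilde X_1+hG_h(\tilde X_1)+(\tilde X_1-X_0)$, $\eta$ solves $B_h(X_1^\star)\eta=B_h(X_0)\xi+\sqrt{2h}\,G_h(\tilde X_1)$, and $$\alpha_h(X_0,\xi)=\min\Big(1,\frac{\det B_h(X_0)}{\det B_h(X_1^\star)}\exp\Big(-\beta\Big[\tfrac{|\eta|^2}{2}-\tfrac{|\xi|^2}{2}+U(X_1^\star)-U(X_0)\Big]\Big)\Big).$$ Notation: for $u,v,w\in\mathbb{R}^n$, $DM_h(x)(u)$ is the matrix with entries $\sum_k\frac{\partial (M_h)_{ij}}{\partial x_k}(x)u_k$, and $DM_h(x)(u,v,w)=\sum_{i,j,k}\frac{\partial (M_h)_{ij}}{\partial x_k}(x)u_kv_jw_i$. Define $$\Gamma_h(x,\xi)=\sqrt{2h}\,(DU(x)+M_h(x)^{-1}G_h(x))^TB_h(x)\xi+\sqrt{2h}\,\tfrac{\beta^{-1}}{2}\operatorname{trace}\big(M_h(x)^{-1}DM_h(x)(B_h(x)\xi)\big)-\sqrt{2h}\,\tfrac12DM_h(x)(B_h(x)\xi,B_h(x)^{-T}\xi,B_h(x)^{-T}\xi)$$ and $\tilde\alpha_h(x,\xi)=\min(1,\exp(-\beta\Gamma_h(x,\xi)))$. *)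

theory Defs
  imports "HOL-Analysis.Analysis" "HOL-Probability.Probability"
begin

definition gauss_pdf :: "real \<Rightarrow> real^'n \<Rightarrow> real" where
  "gauss_pdf \<beta> x = (\<beta> / (2 * pi)) powr (real CARD('n) / 2) * exp (- \<beta> * (norm x)^2 / 2)"

definition gauss :: "real \<Rightarrow> (real^'n) measure" where
  "gauss \<beta> = density lborel (\<lambda>x. ennreal (gauss_pdf \<beta> x))"

definition Mh :: "(real^'n \<Rightarrow> real^'n^'n) \<Rightarrow> real^'n \<Rightarrow> real^'n^'n" where
  "Mh Bh x = Bh x ** transpose (Bh x)"

definition DMh :: "(real^'n \<Rightarrow> real^'n^'n) \<Rightarrow> (real^'n \<Rightarrow> real^'n \<Rightarrow> real^'n^'n)
    \<Rightarrow> real^'n \<Rightarrow> real^'n \<Rightarrow> real^'n^'n" where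
  "DMh Bh DB x u = DB x u ** transpose (Bh x) + Bh x ** transpose (DB x u)"

text \<open>DM_h(x)(u,v,w) = sum_{i,j,k} dM_ij/dx_k u_k v_j w_i = w . (DM_h(x)(u) v).\<close>
definition DMh3 :: "(real^'n \<Rightarrow> real^'n^'n) \<Rightarrow> (real^'n \<Rightarrow> real^'n \<Rightarrow> real^'n^'n)
    \<Rightarrow> real^'n \<Rightarrow> real^'n \<Rightarrow> real^'n \<Rightarrow> real^'n \<Rightarrow> real" where
  "DMh3 Bh DB x u v w = w \<bullet> (DMh Bh DB x u *v v)"

definition alpha_h :: "real \<Rightarrow> (real^'n \<Rightarrow> real) \<Rightarrow> (real^'n \<Rightarrow> real^'n) \<Rightarrow> (real^'n \<Rightarrow> real^'n^'n)
    \<Rightarrow> real \<Rightarrow> real^'n \<Rightarrow> real^'n \<Rightarrow> real" where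
  "alpha_h \<beta> U G Bh h X0 \<xi> =
    (let Xt = X0 + sqrt (h / 2) *\<^sub>R (Bh X0 *v \<xi>);
         Xs = Xt + h *\<^sub>R G Xt + (Xt - X0);
         \<eta> = matrix_inv (Bh Xs) *v (Bh X0 *v \<xi> + sqrt (2 * h) *\<^sub>R G Xt)
     in min 1 (det (Bh X0) / det (Bh Xs) *
          exp (- \<beta> * ((norm \<eta>)^2 / 2 - (norm \<xi>)^2 / 2 + U Xs - U X0))))"

text \<open>Gamma_h(x, xi); gU is the gradient DU of U, DB x u the derivative of B_h at x in direction u.\<close>
definition Gamma_h :: "real \<Rightarrow> (real^'n \<Rightarrow> real^'n) \<Rightarrow> (real^'n \<Rightarrow> real^'n) \<Rightarrow> (real^'n \<Rightarrow> real^'n^'n)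
    \<Rightarrow> (real^'n \<Rightarrow> real^'n \<Rightarrow> real^'n^'n) \<Rightarrow> real \<Rightarrow> real^'n \<Rightarrow> real^'n \<Rightarrow> real" where
  "Gamma_h \<beta> gU G Bh DB h x \<xi> =
     sqrt (2 * h) * ((gU x + matrix_inv (Mh Bh x) *v G x) \<bullet> (Bh x *v \<xi>))
   + sqrt (2 * h) * (inverse \<beta> / 2) * trace (matrix_inv (Mh Bh x) ** DMh Bh DB x (Bh x *v \<xi>))
   - sqrt (2 * h) * (1 / 2) * DMh3 Bh DB x (Bh x *v \<xi>) (transpose (matrix_inv (Bh x)) *v \<xi>)
        (transpose (matrix_inv (Bh x)) *v \<xi>)"

definition alpha_tilde_h :: "real \<Rightarrow> (real^'n \<Rightarrow> real^'n) \<Rightarrow> (real^'n \<Rightarrow> real^'n) \<Rightarrow> (real^'n \<Rightarrow> real^'n^'n)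
    \<Rightarrow> (real^'n \<Rightarrow> real^'n \<Rightarrow> real^'n^'n) \<Rightarrow> real \<Rightarrow> real^'n \<Rightarrow> real^'n \<Rightarrow> real" where
  "alpha_tilde_h \<beta> gU G Bh DB h x \<xi> = min 1 (exp (- \<beta> * Gamma_h \<beta> gU G Bh DB h x \<xi>))"

end

theory Submission
  imports Defs
begin


lemma entry_le_norm: fixes A :: "real^'n^'m" shows "\<bar>A $ i $ j\<bar> \<le> norm A"
  by (meson component_le_norm_cart Finite_Cartesian_Product.norm_nth_le order_trans)

lemma norm_le_entries: fixes A :: "real^'n^'m"
  shows "norm A \<le> (\<Sum>i\<in>UNIV. \<Sum>j\<in>UNIV. \<bar>A $ i $ j\<bar>)"
proof -
  have "norm A \<le> (\<Sum>i\<in>UNIV. norm (A $ i))" by (simp add: norm_vec_def L2_set_le_sum)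
  also have "\<dots> \<le> (\<Sum>i\<in>UNIV. \<Sum>j\<in>UNIV. \<bar>A $ i $ j\<bar>)"
    by (intro sum_mono) (simp add: norm_le_l1_cart)
  finally show ?thesis .
qed

lemma norm_mv: fixes A :: "real^'n^'m"
  shows "norm (A *v x) \<le> real CARD('m) * norm A * norm x"
proof -
  have "norm (A *v x) \<le> (\<Sum>i\<in>UNIV. \<bar>(A *v x) $ i\<bar>)" by (rule norm_le_l1_cart)
  also have "\<dots> \<le> (\<Sum>i::'m\<in>UNIV. norm A * norm x)"
  proof (intro sum_mono)
    fix i
    have "\<bar>(A *v x) $ i\<bar> \<le> norm (A $ i) * norm x"
      by (simp add: matrix_mult_dot Cauchy_Schwarz_ineq2)
    also have "\<dots> \<le> norm A * norm x"
      by (simp add: mult_right_mono Finite_Cartesian_Product.norm_nth_le)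
    finally show "\<bar>(A *v x) $ i\<bar> \<le> norm A * norm x" .
  qed
  finally show ?thesis by simp
qed

lemma norm_mm: fixes A :: "real^'n^'n" and B :: "real^'n^'n"
  shows "norm (A ** B) \<le> real CARD('n)^3 * norm A * norm B"
proof -
  have e: "\<bar>(A ** B) $ i $ j\<bar> \<le> real CARD('n) * (norm A * norm B)" for i j
  proof -
    have "\<bar>(A ** B) $ i $ j\<bar> \<le> (\<Sum>k\<in>UNIV. \<bar>A $ i $ k * B $ k $ j\<bar>)"
      by (simp add: matrix_matrix_mult_def sum_abs)
    also have "\<dots> \<le> (\<Sum>k::'n\<in>UNIV. norm A * norm B)"
      by (intro sum_mono) (simp add: abs_mult entry_le_norm mult_mono')
    finally show ?thesis by simp
  qed
  have "norm (A ** B) \<le> (\<Sum>i\<in>UNIV. \<Sum>j\<in>UNIV. \<bar>(A ** B) $ i $ j\<bar>)" by (rule norm_le_entries)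
  also have "\<dots> \<le> (\<Sum>i::'n\<in>UNIV. \<Sum>j::'n\<in>UNIV. real CARD('n) * (norm A * norm B))"
    by (intro sum_mono e)
  also have "\<dots> = real CARD('n)^3 * norm A * norm B"
    by (simp add: power3_eq_cube)
  finally show ?thesis .
qed

lemma norm_transp: fixes A :: "real^'n^'n"
  shows "norm (transpose A) \<le> real CARD('n)^2 * norm A"
proof -
  have "norm (transpose A) \<le> (\<Sum>i\<in>UNIV. \<Sum>j\<in>UNIV. \<bar>transpose A $ i $ j\<bar>)" by (rule norm_le_entries)
  also have "\<dots> \<le> (\<Sum>i::'n\<in>UNIV. \<Sum>j::'n\<in>UNIV. norm A)"
    by (intro sum_mono) (simp add: transpose_def entry_le_norm)
  finally show ?thesis by (simp add: power2_eq_square)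
qed

lemma trace_le: fixes A :: "real^'n^'n"
  shows "\<bar>trace A\<bar> \<le> real CARD('n) * norm A"
proof -
  have "\<bar>trace A\<bar> \<le> (\<Sum>i\<in>UNIV. \<bar>A $ i $ i\<bar>)" by (simp add: trace_def sum_abs)
  also have "\<dots> \<le> (\<Sum>i::'n\<in>UNIV. norm A)" by (intro sum_mono entry_le_norm)
  finally show ?thesis by simp
qed

lemma trace_transpose: "trace (transpose (A::real^'n^'n)) = trace A"
  by (simp add: trace_def transpose_def)

lemma trace_scaleR: "trace (c *\<^sub>R (A::real^'n^'n)) = c * trace A"
  by (simp add: trace_def sum_distrib_left)

lemma dot_transpose: fixes A :: "real^'n^'n"
  shows "x \<bullet> (A *v y) = (transpose A *v x) \<bullet> y"
proof -
  have "x \<bullet> (A *v y) = (\<Sum>i\<in>UNIV. \<Sum>j\<in>UNIV. x$i * (A$i$j * y$j))"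
    by (simp add: inner_vec_def matrix_vector_mult_def sum_distrib_left)
  also have "\<dots> = (\<Sum>j\<in>UNIV. \<Sum>i\<in>UNIV. x$i * (A$i$j * y$j))" by (rule sum.swap)
  also have "\<dots> = (transpose A *v x) \<bullet> y"
    by (simp add: inner_vec_def matrix_vector_mult_def transpose_def sum_distrib_left mult_ac)
  finally show ?thesis .
qed

lemma inv_props: fixes A :: "real^'n^'n" assumes "invertible A"
  shows "A ** matrix_inv A = mat 1" "matrix_inv A ** A = mat 1"
  using someI_ex[OF assms[unfolded invertible_def]] by (auto simp: matrix_inv_def)

lemma inv_unique: fixes A X :: "real^'n^'n" assumes "invertible A" "X ** A = mat 1"
  shows "matrix_inv A = X"
  by (metis assms inv_props(1) matrix_mul_assoc matrix_mul_lid matrix_mul_rid)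


lemma abs_sign: "\<bar>(of_int (sign p) :: real)\<bar> = 1"
  by (cases rule: sign_cases[of p]) auto

lemma prod_abs_le_pow: fixes f :: "'a \<Rightarrow> real" assumes "finite S" "\<And>i. i \<in> S \<Longrightarrow> \<bar>f i\<bar> \<le> t"
  shows "\<bar>prod f S\<bar> \<le> t ^ card S"
proof -
  have "\<bar>prod f S\<bar> = (\<Prod>i\<in>S. \<bar>f i\<bar>)" by (simp add: abs_prod)
  also have "\<dots> \<le> (\<Prod>i\<in>S. t)" by (intro prod_mono) (use assms in auto)
  finally show ?thesis by simp
qed

lemma det_bound: fixes A :: "real^'n^'n"
  shows "\<bar>det A\<bar> \<le> fact CARD('n) * norm A ^ CARD('n)"
proof -
  let ?P = "{p. p permutes (UNIV::'n set)}"
  have "\<bar>det A\<bar> \<le> (\<Sum>p\<in>?P. \<bar>of_int (sign p) * (\<Prod>i\<in>UNIV. A$i$p i)\<bar>)"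
    unfolding det_def by (rule sum_abs)
  also have "\<dots> \<le> (\<Sum>p\<in>?P. norm A ^ CARD('n))"
  proof (intro sum_mono)
    fix p
    have "\<bar>(\<Prod>i\<in>UNIV. A$i$p i)\<bar> \<le> norm A ^ card (UNIV::'n set)"
      by (rule prod_abs_le_pow) (auto simp: entry_le_norm)
    then show "\<bar>of_int (sign p) * (\<Prod>i\<in>UNIV. A$i$p i)\<bar> \<le> norm A ^ CARD('n)"
      by (simp add: abs_mult abs_sign)
  qed
  also have "\<dots> = fact CARD('n) * norm A ^ CARD('n)"
    by (simp add: card_permutations)
  finally show ?thesis .
qed

lemma prod_one_plus: fixes a :: "'a \<Rightarrow> real"
  assumes "finite S" "\<And>i. i \<in> S \<Longrightarrow> \<bar>a i\<bar> \<le> t" "0 \<le> t" "t \<le> 1"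
  shows "\<bar>(\<Prod>i\<in>S. 1 + a i) - 1\<bar> \<le> (2 ^ card S - 1) * t
    \<and> \<bar>(\<Prod>i\<in>S. 1 + a i) - 1 - (\<Sum>i\<in>S. a i)\<bar> \<le> 4 ^ card S * t^2"
  using assms
proof (induction S rule: finite_induct)
  case empty
  then show ?case by simp
next
  case (insert x F)
  define P where "P = (\<Prod>i\<in>F. 1 + a i)"
  define c where "c = card F"
  have IH1: "\<bar>P - 1\<bar> \<le> (2^c - 1) * t" and IH2: "\<bar>P - 1 - (\<Sum>i\<in>F. a i)\<bar> \<le> 4^c * t^2"
    using insert by (auto simp: P_def c_def)
  have ax: "\<bar>a x\<bar> \<le> t" using insert by auto
  have c1: "(1::real) \<le> 2^c" by simp
  have P2: "\<bar>P\<bar> \<le> 2^c"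
  proof -
    have "\<bar>P\<bar> \<le> 1 + \<bar>P - 1\<bar>" by linarith
    also have "\<dots> \<le> 1 + (2^c - 1)"
    proof -
      have "(2^c - 1) * t \<le> 2^c - 1" using c1 insert.prems(2,3) by (intro mult_left_le) auto
      then show ?thesis using IH1 by linarith
    qed
    finally show ?thesis by simp
  qed
  have e1: "(\<Prod>i\<in>insert x F. 1 + a i) - 1 = a x * P + (P - 1)"
    using insert by (simp add: P_def algebra_simps)
  have e2: "(\<Prod>i\<in>insert x F. 1 + a i) - 1 - (\<Sum>i\<in>insert x F. a i) = (P - 1 - (\<Sum>i\<in>F. a i)) + a x * (P - 1)"
    using insert by (simp add: P_def algebra_simps)
  have b1: "\<bar>a x * P\<bar> \<le> t * 2^c" unfolding abs_mult
    by (rule mult_mono) (use ax P2 insert.prems in auto)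
  have b2: "\<bar>a x * (P - 1)\<bar> \<le> t * ((2^c - 1) * t)" unfolding abs_mult
    by (rule mult_mono) (use ax IH1 insert.prems in auto)
  have "(2^c - 1) * t * t \<le> 4^c * t^2 * 3"
  proof -
    have "(2^c - 1) \<le> (4::real)^c" using c1 by (smt (verit) one_le_power power_mono)
    then have "(2^c - 1) * (t * t) \<le> 4^c * (t*t)" by (intro mult_right_mono) auto
    then have a: "(2^c - 1) * t * t \<le> 4^c * t^2" by (simp add: power2_eq_square mult.assoc)
    have b: "4^c * t^2 \<le> 4^c * t^2 * (3::real)" by simp
    show ?thesis using a b by linarith
  qed
  note q = this
  have cd: "card (insert x F) = Suc c" using insert.hyps by (simp add: c_def)
  have m: "t * ((2^c - 1) * t) = (2^c - 1) * t * t" by (simp add: mult_ac)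
  have "\<bar>(\<Prod>i\<in>insert x F. 1 + a i) - 1 - (\<Sum>i\<in>insert x F. a i)\<bar> = \<bar>(P - 1 - (\<Sum>i\<in>F. a i)) + a x * (P - 1)\<bar>"
    by (simp only: e2)
  also have "\<dots> \<le> \<bar>P - 1 - (\<Sum>i\<in>F. a i)\<bar> + \<bar>a x * (P - 1)\<bar>" by (rule abs_triangle_ineq)
  also have "\<dots> \<le> 4^c * t^2 + 4^c * t^2 * 3" using IH2 b2 q m by linarith
  also have "\<dots> = 4 ^ card (insert x F) * t^2" using cd by simp
  finally have r1: "\<bar>(\<Prod>i\<in>insert x F. 1 + a i) - 1 - (\<Sum>i\<in>insert x F. a i)\<bar> \<le> 4 ^ card (insert x F) * t^2" .
  have "\<bar>(\<Prod>i\<in>insert x F. 1 + a i) - 1\<bar> = \<bar>a x * P + (P - 1)\<bar>" by (simp only: e1)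
  also have "\<dots> \<le> \<bar>a x * P\<bar> + \<bar>P - 1\<bar>" by (rule abs_triangle_ineq)
  also have "\<dots> \<le> t * 2^c + (2^c - 1) * t" using b1 IH1 by linarith
  also have "\<dots> = (2 ^ card (insert x F) - 1) * t" using cd by (simp add: algebra_simps)
  finally have r2: "\<bar>(\<Prod>i\<in>insert x F. 1 + a i) - 1\<bar> \<le> (2 ^ card (insert x F) - 1) * t" .
  show ?case using r1 r2 by blast
qed

lemma perm_nonid_bound: fixes A :: "real^'n^'n"
  assumes p: "p permutes (UNIV::'n set)" and pid: "p \<noteq> id" and t: "norm A \<le> 1"
  shows "\<bar>\<Prod>i\<in>UNIV. (mat 1 + A) $ i $ p i\<bar> \<le> 2 ^ CARD('n) * norm A ^ 2"
proof -
  obtain i where pi: "p i \<noteq> i" using pid by (auto simp: fun_eq_iff)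
  define j where "j = p i"
  have pj: "p j \<noteq> j"
  proof
    assume "p j = j"
    then have "p j = p i" by (simp add: j_def)
    then have "j = i" using permutes_inj[OF p] by (auto dest: injD)
    then show False using pi j_def by simp
  qed
  have ij: "i \<noteq> j" using pi j_def by simp
  let ?c = "\<lambda>k. (mat 1 + A) $ k $ p k"
  have ci: "\<bar>?c i\<bar> \<le> norm A" using pi by (simp add: mat_def entry_le_norm)
  have cj: "\<bar>?c j\<bar> \<le> norm A" using pj by (simp add: mat_def entry_le_norm)
  have ck: "\<bar>?c k\<bar> \<le> 2" for k
  proof -
    have "\<bar>?c k\<bar> \<le> \<bar>mat 1 $ k $ p k\<bar> + \<bar>A $ k $ p k\<bar>" by (simp add: abs_triangle_ineq)
    also have "\<dots> \<le> 1 + 1" using entry_le_norm[of A k "p k"] t by (intro add_mono) (auto simp: mat_def)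
    finally show ?thesis by simp
  qed
  have "(\<Prod>k\<in>UNIV. ?c k) = ?c i * (?c j * (\<Prod>k\<in>UNIV - {i} - {j}. ?c k))"
    using ij by (simp add: prod.remove[of UNIV i] prod.remove[of "UNIV - {i}" j])
  then have "\<bar>\<Prod>k\<in>UNIV. ?c k\<bar> = \<bar>?c i\<bar> * (\<bar>?c j\<bar> * \<bar>\<Prod>k\<in>UNIV - {i} - {j}. ?c k\<bar>)"
    by (simp add: abs_mult)
  also have "\<dots> \<le> norm A * (norm A * 2 ^ card (UNIV - {i} - {j}))"
    by (intro mult_mono ci cj prod_abs_le_pow ck) auto
  also have "\<dots> \<le> norm A * (norm A * 2 ^ CARD('n))"
    by (intro mult_left_mono power_increasing) (auto simp: card_mono)
  finally show ?thesis by (simp add: power2_eq_square mult_ac)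
qed

lemma det_I_plus: fixes A :: "real^'n^'n"
  assumes t: "norm A \<le> 1"
  shows "\<bar>det (mat 1 + A) - 1 - trace A\<bar> \<le> 2 * fact CARD('n) * 4 ^ CARD('n) * norm A ^ 2"
proof -
  let ?P = "{p. p permutes (UNIV::'n set)}"
  let ?T = "\<lambda>p. of_int (sign p) * (\<Prod>i\<in>UNIV. (mat 1 + A) $ i $ p i)"
  have fin: "finite ?P" by (simp add: finite_permutations)
  have idP: "id \<in> ?P" by simp
  have "det (mat 1 + A) = (\<Sum>p\<in>?P. ?T p)" by (simp add: det_def)
  also have "\<dots> = ?T id + (\<Sum>p\<in>?P - {id}. ?T p)" by (rule sum.remove[OF fin idP])
  finally have "det (mat 1 + A) = ?T id + (\<Sum>p\<in>?P - {id}. ?T p)" .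
  moreover have "?T id = (\<Prod>i\<in>UNIV. 1 + A $ i $ i)" by (simp add: mat_def)
  ultimately have e: "det (mat 1 + A) - 1 - trace A = ((\<Prod>i\<in>UNIV. 1 + A $ i $ i) - 1 - (\<Sum>i\<in>UNIV. A$i$i)) + (\<Sum>p\<in>?P - {id}. ?T p)"
    by (simp add: trace_def)
  have b1: "\<bar>(\<Prod>i\<in>UNIV. 1 + A $ i $ i) - 1 - (\<Sum>i\<in>UNIV. A$i$i)\<bar> \<le> 4 ^ CARD('n) * norm A ^ 2"
    using prod_one_plus[of UNIV "\<lambda>i. A$i$i" "norm A"] t by (auto simp: entry_le_norm)
  have "\<bar>\<Sum>p\<in>?P - {id}. ?T p\<bar> \<le> (\<Sum>p\<in>?P - {id}. 2 ^ CARD('n) * norm A ^ 2)"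
    by (rule order_trans[OF sum_abs], rule sum_mono) (use perm_nonid_bound t in \<open>auto simp: abs_mult abs_sign\<close>)
  also have "\<dots> \<le> (\<Sum>p\<in>?P. 2 ^ CARD('n) * norm A ^ 2)"
    by (rule sum_mono2[OF fin]) auto
  also have "\<dots> = fact CARD('n) * (2 ^ CARD('n) * norm A ^ 2)" by (simp add: card_permutations)
  also have "\<dots> \<le> fact CARD('n) * (4 ^ CARD('n) * norm A ^ 2)"
    by (intro mult_left_mono mult_right_mono power_mono) auto
  finally have b2: "\<bar>\<Sum>p\<in>?P - {id}. ?T p\<bar> \<le> fact CARD('n) * (4 ^ CARD('n) * norm A ^ 2)" .
  have "(1::real) \<le> fact CARD('n)" by simp
  then have "4 ^ CARD('n) * norm A ^ 2 \<le> fact CARD('n) * (4 ^ CARD('n) * norm A ^ 2)"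
    using mult_right_mono[of 1 "fact CARD('n)" "4 ^ CARD('n) * norm A ^ 2"] by simp
  then show ?thesis using e b1 b2 by (simp add: mult_ac)
qed


lemma minexp_lip: fixes a b :: real shows "\<bar>min 1 (exp a) - min 1 (exp b)\<bar> \<le> \<bar>a - b\<bar>"
proof -
  have key: "min 1 (exp b) - min 1 (exp a) \<le> b - a \<and> 0 \<le> min 1 (exp b) - min 1 (exp a)" if ab: "a \<le> b" for a b :: real
  proof (cases "a \<ge> 0")
    case True
    then show ?thesis using ab by (simp add: min_def)
  next
    case False
    define m where "m = min b 0"
    have m1: "min 1 (exp b) = exp m" by (auto simp: m_def min_def)
    have ma: "a \<le> m" using ab False by (simp add: m_def)
    have em: "exp m \<le> 1" by (simp add: m_def)
    have "1 + (a - m) \<le> exp (a - m)" by (rule exp_ge_add_one_self)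
    then have z: "1 - exp (a - m) \<le> m - a" by linarith
    have nn: "0 \<le> 1 - exp (a - m)" using ma by simp
    have "exp m - exp a = exp m * (1 - exp (a - m))" by (simp add: algebra_simps exp_diff)
    also have "\<dots> \<le> 1 * (m - a)" by (intro mult_mono em z nn) auto
    finally have "exp m - exp a \<le> m - a" by simp
    moreover have "min 1 (exp a) = exp a" using False by simp
    moreover have "m \<le> b" by (simp add: m_def)
    moreover have "exp a \<le> exp m" using ma by simp
    ultimately show ?thesis using m1 by linarith
  qed
  show ?thesis
  proof (cases "a \<le> b")
    case True then show ?thesis using key[OF True] by linarith
  next
    case False then have "b \<le> a" by simp
    then show ?thesis using key[of b a] by linarith
  qed
qed

lemma ln_det_I_plus: fixes A :: "real^'n^'n"
  assumes pos: "det (mat 1 + A) > 0" and L: "\<bar>ln (det (mat 1 + A))\<bar> \<le> L"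
  shows "\<bar>ln (det (mat 1 + A)) - trace A\<bar> \<le>
    (2 * (real CARD('n) + 2 * fact CARD('n) * 4 ^ CARD('n))^2 + 2 * fact CARD('n) * 4 ^ CARD('n)
     + 4 * (real CARD('n) + 2 * fact CARD('n) * 4 ^ CARD('n))^2 * L
     + 2 * real CARD('n) * (real CARD('n) + 2 * fact CARD('n) * 4 ^ CARD('n))) * norm A ^ 2"
proof -
  define N where "N = real CARD('n)"
  define c where "c = 2 * fact CARD('n) * (4::real) ^ CARD('n)"
  define t where "t = norm A"
  have N1: "1 \<le> N" by (simp add: N_def)
  have c0: "0 \<le> c" by (simp add: c_def)
  have Nc: "1 \<le> N + c" using N1 c0 by simp
  have L0: "0 \<le> L" using L by simp
  have t0: "0 \<le> t" by (simp add: t_def)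
  define \<delta> where "\<delta> = 1 / (2 * (N + c))"
  have d0: "0 < \<delta>" using Nc by (simp add: \<delta>_def)
  have dhalf: "\<delta> \<le> 1/2" using Nc by (simp add: \<delta>_def field_simps)
  have tr: "\<bar>trace A\<bar> \<le> N * t" using trace_le[of A] by (simp add: N_def t_def)
  have goal: "\<bar>ln (det (mat 1 + A)) - trace A\<bar> \<le> (2 * (N + c)^2 + c + 4 * (N + c)^2 * L + 2 * N * (N + c)) * t ^ 2"
  proof (cases "t \<le> \<delta>")
    case True
    have t1: "t \<le> 1" using True dhalf by simp
    define y where "y = det (mat 1 + A) - 1"
    have yt: "\<bar>y - trace A\<bar> \<le> c * t^2" using det_I_plus[of A] t1 by (simp add: y_def c_def t_def)
    have "c * t^2 \<le> c * t" using t1 t0 c0 by (intro mult_left_mono) (auto simp: power2_eq_square mult_left_le)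
    then have ya: "\<bar>y\<bar> \<le> (N + c) * t" using yt tr by (simp add: algebra_simps)
    have "(N + c) * t \<le> (N + c) * \<delta>" using True Nc by (intro mult_left_mono) auto
    also have "\<dots> = 1/2" using Nc by (simp add: \<delta>_def)
    finally have yh: "\<bar>y\<bar> \<le> 1/2" using ya by linarith
    have "\<bar>ln (1 + y) - y\<bar> \<le> 2 * y^2" by (rule abs_ln_one_plus_x_minus_x_bound[OF yh])
    also have "\<dots> \<le> 2 * ((N + c) * t)^2"
    proof -
      have "y^2 \<le> ((N + c) * t)^2" using ya by (metis abs_ge_zero power2_abs power_mono)
      then show ?thesis by linarith
    qed
    finally have l1: "\<bar>ln (1 + y) - y\<bar> \<le> 2 * (N + c)^2 * t^2" by (simp add: power_mult_distrib)
    have "\<bar>ln (det (mat 1 + A)) - trace A\<bar> \<le> \<bar>ln (1 + y) - y\<bar> + \<bar>y - trace A\<bar>"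
      by (simp add: y_def)
    also have "\<dots> \<le> 2 * (N + c)^2 * t^2 + c * t^2" using l1 yt by linarith
    also have "\<dots> \<le> (2 * (N + c)^2 + c + 4 * (N + c)^2 * L + 2 * N * (N + c)) * t ^ 2"
      using L0 N1 c0 t0 by (simp add: algebra_simps)
    finally show ?thesis .
  next
    case False
    then have td: "\<delta> < t" by simp
    have r: "1 \<le> t / \<delta>" using td d0 by simp
    have "L \<le> L * (t / \<delta>)^2"
      using L0 r by (metis mult_left_mono mult_1_right one_le_power)
    also have "\<dots> = 4 * (N + c)^2 * L * t^2" using Nc by (simp add: \<delta>_def power_divide field_simps power_mult_distrib) (simp add: power2_eq_square algebra_simps)
    finally have l1: "L \<le> 4 * (N + c)^2 * L * t^2" .
    have "N * t \<le> N * t * (t / \<delta>)" using r N1 t0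
      by (metis mult_left_mono mult_1_right mult_nonneg_nonneg order_trans zero_le_one)
    also have "\<dots> = 2 * N * (N + c) * t^2" using Nc by (simp add: \<delta>_def field_simps power2_eq_square)
    finally have l2: "N * t \<le> 2 * N * (N + c) * t^2" .
    have "\<bar>ln (det (mat 1 + A)) - trace A\<bar> \<le> L + N * t" using L tr by linarith
    also have "\<dots> \<le> (2 * (N + c)^2 + c + 4 * (N + c)^2 * L + 2 * N * (N + c)) * t ^ 2"
      using l1 l2 c0 t0 by (simp add: algebra_simps) (smt (verit) zero_le_power2 mult_nonneg_nonneg)
    finally show ?thesis .
  qed
  then show ?thesis by (simp add: N_def c_def t_def)
qed


lemma mm_diff_l: "(A::real^'n^'n) ** (B - C) = A ** B - A ** C"
  by (simp add: matrix_matrix_mult_def vec_eq_iff algebra_simps sum_subtractf)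
lemma mm_diff_r: "((A::real^'n^'n) - B) ** C = A ** C - B ** C"
  by (simp add: matrix_matrix_mult_def vec_eq_iff algebra_simps sum_subtractf)
lemma mm_add_r: "((A::real^'n^'n) + B) ** C = A ** C + B ** C"
  by (simp add: matrix_matrix_mult_def vec_eq_iff algebra_simps sum.distrib)
lemma mm_scale_l: "(c *\<^sub>R (A::real^'n^'n)) ** B = c *\<^sub>R (A ** B)"
  by (simp add: matrix_matrix_mult_def vec_eq_iff algebra_simps sum_distrib_left)
lemma mm_scale_r: "(A::real^'n^'n) ** (c *\<^sub>R B) = c *\<^sub>R (A ** B)"
  by (simp add: matrix_matrix_mult_def vec_eq_iff algebra_simps sum_distrib_left)

lemma lip_gen:
  fixes f :: "'a::real_normed_vector \<Rightarrow> 'b::real_normed_vector"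
  assumes "\<And>z. (f has_derivative f' z) (at z)" "\<And>z. onorm (f' z) \<le> M"
  shows "norm (f y - f x) \<le> M * norm (y - x)"
  using differentiable_bound[of UNIV f f' M y x] assms by auto

lemma lin_gen:
  fixes f :: "'a::real_normed_vector \<Rightarrow> 'b::real_normed_vector"
  assumes d: "\<And>z. (f has_derivative f' z) (at z)"
    and b: "\<And>z. onorm (f' z - f' x) \<le> M * norm (z - x)" and M: "0 \<le> M"
  shows "norm (f y - f x - f' x (y - x)) \<le> M * norm (y - x) ^ 2"
proof -
  have "norm (f y - f x - f' x (y - x)) \<le> norm (y - x) * (M * norm (y - x))"
  proof (rule differentiable_bound_linearization[where S="closed_segment x y" and f'=f'])
    fix t :: real assume "t \<in> {0..1}"
    then show "x + t *\<^sub>R (y - x) \<in> closed_segment x y"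
      unfolding closed_segment_def by (auto intro!: exI[of _ t] simp: algebra_simps)
  next
    fix z assume "z \<in> closed_segment x y"
    show "(f has_derivative f' z) (at z within closed_segment x y)"
      using d has_derivative_at_withinI by blast
  next
    fix z assume z: "z \<in> closed_segment x y"
    obtain v where v: "0 \<le> v" "v \<le> 1" "z = (1 - v) *\<^sub>R x + v *\<^sub>R y"
      using z unfolding closed_segment_def by auto
    then have "z - x = v *\<^sub>R (y - x)" by (simp add: algebra_simps)
    then have "norm (z - x) = v * norm (y - x)" using v by simp
    also have "\<dots> \<le> norm (y - x)" using v by (simp add: mult_left_le_one_le)
    finally have "norm (z - x) \<le> norm (y - x)" .
    then show "onorm (f' z - f' x) \<le> M * norm (y - x)"
      using b[of z] M by (meson mult_left_mono order_trans)
  qed auto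
  then show ?thesis by (simp add: power2_eq_square mult_ac)
qed

locale LS =
  fixes U :: "real^'n \<Rightarrow> real" and gU :: "real^'n \<Rightarrow> real^'n"
    and HU :: "real^'n \<Rightarrow> real^'n \<Rightarrow> real^'n"
    and \<beta> :: real and G :: "real^'n \<Rightarrow> real^'n" and DG :: "real^'n \<Rightarrow> real^'n \<Rightarrow> real^'n"
    and B :: "real^'n \<Rightarrow> real^'n^'n"
    and DB :: "real^'n \<Rightarrow> (real^'n) \<Rightarrow>\<^sub>L (real^'n^'n)"
    and D2B :: "real^'n \<Rightarrow> real^'n \<Rightarrow> ((real^'n) \<Rightarrow>\<^sub>L (real^'n^'n))"
    and h K :: real
  assumes beta_pos: "\<beta> > 0" and h_pos: "0 < h" and h_lt1: "h < 1" and K1: "1 \<le> K"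
    and U_d: "\<And>x. (U has_derivative (\<lambda>v. gU x \<bullet> v)) (at x)"
    and gU_d: "\<And>x. (gU has_derivative HU x) (at x)"
    and gU_b: "\<And>x. norm (gU x) \<le> K" and HU_b: "\<And>x. onorm (HU x) \<le> K"
    and G_b: "\<And>x. norm (G x) \<le> K" and G_d: "\<And>x. (G has_derivative DG x) (at x)"
    and DG_b: "\<And>x. onorm (DG x) \<le> K"
    and B_inv: "\<And>x. invertible (B x)" and B_b: "\<And>x. norm (B x) \<le> K"
    and Bi_b: "\<And>x. norm (matrix_inv (B x)) \<le> K"
    and B_d: "\<And>x. (B has_derivative blinfun_apply (DB x)) (at x)"
    and DB_b: "\<And>x. norm (DB x) \<le> K"
    and DB_d: "\<And>x. (DB has_derivative D2B x) (at x)"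
    and D2B_b: "\<And>x. onorm (D2B x) \<le> K"
begin

lemma K0: "0 \<le> K" using K1 by simp

lemma LB: "norm (B y - B x) \<le> K * norm (y - x)"
  by (rule lip_gen[OF B_d]) (metis norm_blinfun.rep_eq DB_b)

lemma LDB: "norm (DB y - DB x) \<le> K * norm (y - x)"
  by (rule lip_gen[OF DB_d D2B_b])

lemma LG: "norm (G y - G x) \<le> K * norm (y - x)"
  by (rule lip_gen[OF G_d DG_b])

lemma LgU: "norm (gU y - gU x) \<le> K * norm (y - x)"
  by (rule lip_gen[OF gU_d HU_b])

lemma LinB: "norm (B y - B x - DB x (y - x)) \<le> K * norm (y - x) ^ 2"
proof (rule lin_gen[where f'="\<lambda>z. blinfun_apply (DB z)", OF B_d _ K0])
  fix z
  have "onorm (blinfun_apply (DB z) - blinfun_apply (DB x)) = norm (DB z - DB x)"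
    by (simp add: norm_blinfun.rep_eq minus_blinfun.rep_eq fun_diff_def)
  then show "onorm (blinfun_apply (DB z) - blinfun_apply (DB x)) \<le> K * norm (z - x)"
    using LDB by simp
qed

lemma LinU: "\<bar>U y - U x - gU x \<bullet> (y - x)\<bar> \<le> K * norm (y - x) ^ 2"
proof -
  have "norm (U y - U x - (\<lambda>v. gU x \<bullet> v) (y - x)) \<le> K * norm (y - x) ^ 2"
  proof (rule lin_gen[where f'="\<lambda>z v. gU z \<bullet> v", OF U_d _ K0])
    fix z
    show "onorm ((\<lambda>v. gU z \<bullet> v) - (\<lambda>v. gU x \<bullet> v)) \<le> K * norm (z - x)"
    proof (rule onorm_le)
      fix v
      have "norm (((\<lambda>v. gU z \<bullet> v) - (\<lambda>v. gU x \<bullet> v)) v) = \<bar>(gU z - gU x) \<bullet> v\<bar>"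
        by (simp add: inner_diff_left)
      also have "\<dots> \<le> norm (gU z - gU x) * norm v" by (rule Cauchy_Schwarz_ineq2)
      also have "\<dots> \<le> K * norm (z - x) * norm v" using LgU by (simp add: mult_right_mono)
      finally show "norm (((\<lambda>v. gU z \<bullet> v) - (\<lambda>v. gU x \<bullet> v)) v) \<le> K * norm (z - x) * norm v" .
    qed
  qed
  then show ?thesis by simp
qed

lemma Bi_diff: "matrix_inv (B y) - matrix_inv (B x) = matrix_inv (B y) ** (B x - B y) ** matrix_inv (B x)"
proof -
  have "matrix_inv (B y) ** (B x - B y) ** matrix_inv (B x)
     = matrix_inv (B y) ** (B x ** matrix_inv (B x)) - (matrix_inv (B y) ** B y) ** matrix_inv (B x)"
    by (simp add: mm_diff_l mm_diff_r matrix_mul_assoc)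
  also have "\<dots> = matrix_inv (B y) - matrix_inv (B x)" by (simp add: inv_props[OF B_inv])
  finally show ?thesis by simp
qed

lemma LBi: "norm (matrix_inv (B y) - matrix_inv (B x)) \<le> real CARD('n)^6 * K^3 * norm (y - x)"
proof -
  define N where "N = real CARD('n)"
  have "norm (matrix_inv (B y) - matrix_inv (B x)) \<le> N^3 * norm (matrix_inv (B y) ** (B x - B y)) * norm (matrix_inv (B x))"
    unfolding Bi_diff N_def by (rule norm_mm)
  also have "\<dots> \<le> N^3 * (N^3 * K * (K * norm (y - x))) * K"
  proof -
    have "norm (matrix_inv (B y) ** (B x - B y)) \<le> N^3 * norm (matrix_inv (B y)) * norm (B x - B y)"
      unfolding N_def by (rule norm_mm)
    also have "\<dots> \<le> N^3 * K * (K * norm (y - x))"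
      using Bi_b LB[of x y] K0 by (intro mult_mono) (auto simp: N_def norm_minus_commute)
    finally have a: "norm (matrix_inv (B y) ** (B x - B y)) \<le> N^3 * K * (K * norm (y - x))" .
    show ?thesis using a Bi_b K0 by (intro mult_mono mult_left_mono) (auto simp: N_def)
  qed
  also have "\<dots> = N^6 * K^3 * norm (y - x)" by (simp add: power_def algebra_simps)
  finally show ?thesis by (simp add: N_def)
qed

end


lemma inv_BBt: fixes Bf :: "real^'n^'n" assumes inv: "invertible Bf"
  shows "matrix_inv (Bf ** transpose Bf) = transpose (matrix_inv Bf) ** matrix_inv Bf"
proof (rule inv_unique)
  show "invertible (Bf ** transpose Bf)" by (intro invertible_mult transpose_invertible inv)
  have "transpose (matrix_inv Bf) ** matrix_inv Bf ** (Bf ** transpose Bf)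
      = transpose (matrix_inv Bf) ** (matrix_inv Bf ** Bf) ** transpose Bf"
    by (simp add: matrix_mul_assoc)
  also have "\<dots> = transpose (matrix_inv Bf) ** transpose Bf" by (simp add: inv_props[OF inv])
  also have "\<dots> = transpose (Bf ** matrix_inv Bf)" by (rule matrix_transpose_mul[symmetric])
  also have "\<dots> = mat 1" by (simp add: inv_props[OF inv])
  finally show "transpose (matrix_inv Bf) ** matrix_inv Bf ** (Bf ** transpose Bf) = mat 1" .
qed

lemma trace_id: fixes Bf D :: "real^'n^'n" assumes inv: "invertible Bf"
  shows "trace (matrix_inv (Bf ** transpose Bf) ** (D ** transpose Bf + Bf ** transpose D))
       = 2 * trace (matrix_inv Bf ** D)"
proof -
  let ?Bi = "matrix_inv Bf"
  have "matrix_inv (Bf ** transpose Bf) ** (D ** transpose Bf + Bf ** transpose D)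
     = transpose ?Bi ** (?Bi ** D ** transpose Bf) + transpose ?Bi ** ((?Bi ** Bf) ** transpose D)"
    by (simp add: inv_BBt[OF inv] matrix_add_ldistrib matrix_mul_assoc)
  also have "\<dots> = transpose ?Bi ** (?Bi ** D ** transpose Bf) + transpose ?Bi ** transpose D"
    by (simp add: inv_props[OF inv])
  finally have e: "matrix_inv (Bf ** transpose Bf) ** (D ** transpose Bf + Bf ** transpose D)
     = transpose ?Bi ** (?Bi ** D ** transpose Bf) + transpose ?Bi ** transpose D" .
  have t1: "trace (transpose ?Bi ** (?Bi ** D ** transpose Bf)) = trace (?Bi ** D)"
  proof -
    have "trace (transpose ?Bi ** (?Bi ** D ** transpose Bf)) = trace (?Bi ** D ** transpose Bf ** transpose ?Bi)"
      by (rule trace_mul_sym)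
    also have "\<dots> = trace (?Bi ** D ** transpose (?Bi ** Bf))"
      by (simp add: matrix_transpose_mul matrix_mul_assoc)
    also have "\<dots> = trace (?Bi ** D)" by (simp add: inv_props[OF inv])
    finally show ?thesis .
  qed
  have t2: "trace (transpose ?Bi ** transpose D) = trace (?Bi ** D)"
    by (metis matrix_transpose_mul trace_mul_sym trace_transpose)
  show ?thesis by (simp add: e trace_add t1 t2)
qed

lemma D3_id: fixes Bf D :: "real^'n^'n" and \<xi> :: "real^'n" assumes inv: "invertible Bf"
  defines "v \<equiv> transpose (matrix_inv Bf) *v \<xi>"
  shows "v \<bullet> ((D ** transpose Bf + Bf ** transpose D) *v v) = 2 * (\<xi> \<bullet> (matrix_inv Bf *v (D *v \<xi>)))"
proof -
  have tv: "transpose Bf *v v = \<xi>"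
    by (simp add: v_def matrix_vector_mul_assoc matrix_transpose_mul[symmetric] inv_props[OF inv]
                  del: transpose_matrix_vector)
  have vD: "v \<bullet> (D *v \<xi>) = \<xi> \<bullet> (matrix_inv Bf *v (D *v \<xi>))"
    unfolding v_def by (rule dot_transpose[symmetric])
  have a: "v \<bullet> (D *v (transpose Bf *v v)) = \<xi> \<bullet> (matrix_inv Bf *v (D *v \<xi>))"
    by (simp only: tv vD)
  have b: "v \<bullet> (Bf *v (transpose D *v v)) = \<xi> \<bullet> (matrix_inv Bf *v (D *v \<xi>))"
  proof -
    have "v \<bullet> (Bf *v (transpose D *v v)) = (transpose Bf *v v) \<bullet> (transpose D *v v)"
      by (rule dot_transpose)
    also have "\<dots> = \<xi> \<bullet> (transpose D *v v)" by (simp add: tv del: transpose_matrix_vector)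
    also have "\<dots> = (D *v \<xi>) \<bullet> v" using dot_transpose[of \<xi> "transpose D" v] by (simp del: transpose_matrix_vector)
    also have "\<dots> = v \<bullet> (D *v \<xi>)" by (simp add: inner_commute)
    also have "\<dots> = \<xi> \<bullet> (matrix_inv Bf *v (D *v \<xi>))" by (rule vD)
    finally show ?thesis .
  qed
  have "(D ** transpose Bf + Bf ** transpose D) *v v = D *v (transpose Bf *v v) + Bf *v (transpose D *v v)"
    by (simp add: matrix_vector_mult_add_rdistrib matrix_vector_mul_assoc del: transpose_matrix_vector)
  then show ?thesis using a b by (simp add: inner_add_right)
qed

lemma G_id: fixes Bf :: "real^'n^'n" assumes inv: "invertible Bf"
  shows "(matrix_inv (Bf ** transpose Bf) *v g) \<bullet> (Bf *v \<xi>) = \<xi> \<bullet> (matrix_inv Bf *v g)"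
proof -
  have "(matrix_inv (Bf ** transpose Bf) *v g) \<bullet> (Bf *v \<xi>) = (transpose (matrix_inv Bf) *v (matrix_inv Bf *v g)) \<bullet> (Bf *v \<xi>)"
    by (simp add: inv_BBt[OF inv] matrix_vector_mul_assoc del: transpose_matrix_vector)
  also have "\<dots> = (matrix_inv Bf *v g) \<bullet> (matrix_inv Bf *v (Bf *v \<xi>))"
    by (simp add: dot_transpose del: transpose_matrix_vector)
  also have "\<dots> = (matrix_inv Bf *v g) \<bullet> \<xi>" by (simp add: matrix_vector_mul_assoc inv_props[OF inv])
  finally show ?thesis by (simp add: inner_commute)
qed


lemma mv_le: fixes A :: "real^'n^'n"
  assumes "norm A \<le> a" "norm x \<le> b" shows "norm (A *v x) \<le> real CARD('n) * a * b"
proof -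
  have "norm (A *v x) \<le> real CARD('n) * norm A * norm x" by (rule norm_mv)
  also have "\<dots> \<le> real CARD('n) * a * b"
    using assms order_trans[OF norm_ge_zero assms(1)] by (intro mult_mono mult_left_mono) (auto intro: order_trans[OF norm_ge_zero])
  finally show ?thesis .
qed

lemma mm_le: fixes A B :: "real^'n^'n"
  assumes "norm A \<le> a" "norm B \<le> b" shows "norm (A ** B) \<le> real CARD('n)^3 * a * b"
proof -
  have "norm (A ** B) \<le> real CARD('n)^3 * norm A * norm B" by (rule norm_mm)
  also have "\<dots> \<le> real CARD('n)^3 * a * b"
    using assms order_trans[OF norm_ge_zero assms(1)] by (intro mult_mono mult_left_mono) (auto intro: order_trans[OF norm_ge_zero])
  finally show ?thesis .
qed

lemma dot_le: fixes x y :: "'a::real_inner"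
  assumes "norm x \<le> a" "norm y \<le> b" shows "\<bar>x \<bullet> y\<bar> \<le> a * b"
proof -
  have "\<bar>x \<bullet> y\<bar> \<le> norm x * norm y" by (rule Cauchy_Schwarz_ineq2)
  also have "\<dots> \<le> a * b" using assms by (intro mult_mono) (auto intro: order_trans[OF norm_ge_zero])
  finally show ?thesis .
qed

lemma blin_le: assumes "norm f \<le> a" "norm v \<le> b" shows "norm (blinfun_apply f v) \<le> a * b"
proof -
  have "norm (blinfun_apply f v) \<le> norm f * norm v" by (rule norm_blinfun)
  also have "\<dots> \<le> a * b" using assms by (intro mult_mono) (auto intro: order_trans[OF norm_ge_zero])
  finally show ?thesis .
qed

lemma continuous_on_det: fixes f :: "'a::topological_space \<Rightarrow> real^'n^'n"
  assumes "continuous_on S f" shows "continuous_on S (\<lambda>x. det (f x))"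
  unfolding det_def by (intro continuous_intros assms)

definition cld :: "nat \<Rightarrow> real \<Rightarrow> real" where
  "cld n L = 2 * (real n + 2 * fact n * 4 ^ n)^2 + 2 * fact n * 4 ^ n
     + 4 * (real n + 2 * fact n * 4 ^ n)^2 * L + 2 * real n * (real n + 2 * fact n * 4 ^ n)"

lemma ln_det_I_plus': fixes A :: "real^'n^'n"
  assumes "det (mat 1 + A) > 0" "\<bar>ln (det (mat 1 + A))\<bar> \<le> L"
  shows "\<bar>ln (det (mat 1 + A)) - trace A\<bar> \<le> cld CARD('n) L * norm A ^ 2"
  using ln_det_I_plus[OF assms] by (simp add: cld_def)


context LS begin

definition "uu x \<xi> = B x *v \<xi>"
definition "Xt x \<xi> = x + sqrt (h/2) *\<^sub>R uu x \<xi>"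
definition "Xs x \<xi> = Xt x \<xi> + h *\<^sub>R G (Xt x \<xi>) + (Xt x \<xi> - x)"

lemma sq2: "sqrt (2*h) = 2 * sqrt (h/2)"
proof -
  have "sqrt (2*h) = sqrt (2^2 * (h/2))" by simp
  also have "\<dots> = 2 * sqrt (h/2)" by (simp only: real_sqrt_mult real_sqrt_abs)
  finally show ?thesis .
qed

lemma s_facts: "0 < sqrt h" "sqrt h \<le> 1" "sqrt h * sqrt h = h" "h \<le> sqrt h"
    "sqrt (2*h) \<le> 2 * sqrt h" "sqrt (h/2) \<le> sqrt h"
proof -
  show "0 < sqrt h" using h_pos by simp
  show "sqrt h \<le> 1" using h_lt1 by simp
  show "sqrt h * sqrt h = h" using h_pos by simp
  have "sqrt h * sqrt h \<le> sqrt h * 1" using \<open>sqrt h \<le> 1\<close> h_pos by (intro mult_left_mono) auto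
  then show "h \<le> sqrt h" using \<open>sqrt h * sqrt h = h\<close> by simp
  have "sqrt (2*h) = sqrt 2 * sqrt h" by (simp add: real_sqrt_mult)
  also have "\<dots> \<le> 2 * sqrt h"
  proof -
    have "sqrt 2 \<le> sqrt 4" by (rule real_sqrt_le_mono) simp
    then have "sqrt 2 \<le> 2" by (simp only: real_sqrt_four)
    then show ?thesis using h_pos by (intro mult_right_mono) auto
  qed
  finally show "sqrt (2*h) \<le> 2 * sqrt h" .
  show "sqrt (h/2) \<le> sqrt h" using h_pos by simp
qed

lemma d_eq: "Xs x \<xi> - x = sqrt (2*h) *\<^sub>R uu x \<xi> + h *\<^sub>R G (Xt x \<xi>)"
proof -
  have a: "Xt x \<xi> - x = sqrt (h/2) *\<^sub>R uu x \<xi>" by (simp add: Xt_def)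
  have "Xs x \<xi> - x = (Xt x \<xi> - x) + (Xt x \<xi> - x) + h *\<^sub>R G (Xt x \<xi>)"
    by (simp add: Xs_def)
  also have "\<dots> = sqrt (h/2) *\<^sub>R uu x \<xi> + sqrt (h/2) *\<^sub>R uu x \<xi> + h *\<^sub>R G (Xt x \<xi>)"
    by (simp only: a)
  also have "sqrt (h/2) *\<^sub>R uu x \<xi> + sqrt (h/2) *\<^sub>R uu x \<xi> = sqrt (2*h) *\<^sub>R uu x \<xi>"
  proof -
    have "sqrt (2*h) *\<^sub>R uu x \<xi> = (sqrt (h/2) + sqrt (h/2)) *\<^sub>R uu x \<xi>" by (subst sq2) (simp only: mult_2)
    also have "\<dots> = sqrt (h/2) *\<^sub>R uu x \<xi> + sqrt (h/2) *\<^sub>R uu x \<xi>" by (rule scaleR_left_distrib)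
    finally show ?thesis by simp
  qed
  finally show ?thesis .
qed

lemma u_b: "norm (uu x \<xi>) \<le> real CARD('n) * K * (1 + norm \<xi>)"
  unfolding uu_def by (rule mv_le) (auto simp: B_b)

lemma Xt_b: "norm (Xt x \<xi> - x) \<le> real CARD('n) * K * sqrt h * (1 + norm \<xi>)"
proof -
  have "norm (Xt x \<xi> - x) = sqrt (h/2) * norm (uu x \<xi>)" using h_pos by (simp add: Xt_def)
  also have "\<dots> \<le> sqrt h * (real CARD('n) * K * (1 + norm \<xi>))"
    using s_facts u_b by (intro mult_mono) auto
  finally show ?thesis by (simp add: mult_ac)
qed

lemma d_b: "norm (Xs x \<xi> - x) \<le> 3 * real CARD('n) * K * sqrt h * (1 + norm \<xi>)"
proof -
  define N where "N = real CARD('n)"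
  define w where "w = 1 + norm \<xi>"
  have N1: "1 \<le> N" by (simp add: N_def)
  have w1: "1 \<le> w" by (simp add: w_def)
  have "norm (Xs x \<xi> - x) \<le> norm (sqrt (2*h) *\<^sub>R uu x \<xi>) + norm (h *\<^sub>R G (Xt x \<xi>))"
    unfolding d_eq by (rule norm_triangle_ineq)
  also have "\<dots> = sqrt (2*h) * norm (uu x \<xi>) + h * norm (G (Xt x \<xi>))" using h_pos by simp
  also have "\<dots> \<le> (2 * sqrt h) * (N * K * w) + sqrt h * K"
    using s_facts u_b G_b h_pos by (intro add_mono mult_mono) (auto simp: N_def w_def)
  also have "\<dots> \<le> (2 * sqrt h) * (N * K * w) + sqrt h * (N * K * w)"
  proof -
    have "1 * 1 \<le> N * w" by (rule mult_mono) (use N1 w1 in auto)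
    then have "K * 1 \<le> K * (N * w)" using K0 by (intro mult_left_mono) auto
    then have "K \<le> N * K * w" by (simp add: mult_ac)
    then show ?thesis using s_facts by (intro add_left_mono mult_left_mono) auto
  qed
  also have "\<dots> = 3 * N * K * sqrt h * w" by (simp add: algebra_simps)
  finally show ?thesis by (simp add: N_def w_def)
qed

lemma d2_b: "norm (Xs x \<xi> - x) ^ 2 \<le> 9 * real CARD('n)^2 * K^2 * h * (1 + norm \<xi>)^2"
proof -
  have "norm (Xs x \<xi> - x) ^ 2 \<le> (3 * real CARD('n) * K * sqrt h * (1 + norm \<xi>))^2"
    by (rule power_mono[OF d_b norm_ge_zero])
  also have "\<dots> = 9 * real CARD('n)^2 * K^2 * (sqrt h)^2 * (1 + norm \<xi>)^2"
    by (simp add: power_mult_distrib)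
  finally show ?thesis using h_pos by simp
qed

lemma EU_b: "\<bar>U (Xs x \<xi>) - U x - sqrt (2*h) * (gU x \<bullet> uu x \<xi>)\<bar>
   \<le> (9 * real CARD('n)^2 * K^3 + K^2) * h * (1 + norm \<xi>)^2"
proof -
  define w where "w = 1 + norm \<xi>"
  have w1: "1 \<le> w" by (simp add: w_def)
  have e: "U (Xs x \<xi>) - U x - sqrt (2*h) * (gU x \<bullet> uu x \<xi>)
     = (U (Xs x \<xi>) - U x - gU x \<bullet> (Xs x \<xi> - x)) + gU x \<bullet> (h *\<^sub>R G (Xt x \<xi>))"
    by (simp add: d_eq inner_add_right)
  have b1: "\<bar>U (Xs x \<xi>) - U x - gU x \<bullet> (Xs x \<xi> - x)\<bar> \<le> K * (9 * real CARD('n)^2 * K^2 * h * w^2)"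
  proof -
    have "K * norm (Xs x \<xi> - x) ^ 2 \<le> K * (9 * real CARD('n)^2 * K^2 * h * w^2)"
      unfolding w_def by (intro mult_left_mono d2_b K0)
    then show ?thesis using LinU[of "Xs x \<xi>" x] by linarith
  qed
  have "\<bar>gU x \<bullet> (h *\<^sub>R G (Xt x \<xi>))\<bar> \<le> K * (h * K)"
    by (rule dot_le) (use gU_b G_b h_pos in \<open>auto intro: mult_left_mono\<close>)
  also have "\<dots> \<le> K^2 * h * w^2"
  proof -
    have "K * (h * K) = K^2 * h * 1" by (simp add: power2_eq_square)
    also have "\<dots> \<le> K^2 * h * w^2" using w1 h_pos by (intro mult_left_mono) (auto simp: one_le_power)
    finally show ?thesis .
  qed
  finally have b2: "\<bar>gU x \<bullet> (h *\<^sub>R G (Xt x \<xi>))\<bar> \<le> K^2 * h * w^2" .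
  have "\<bar>U (Xs x \<xi>) - U x - sqrt (2*h) * (gU x \<bullet> uu x \<xi>)\<bar> \<le> K * (9 * real CARD('n)^2 * K^2 * h * w^2) + K^2 * h * w^2"
    unfolding e using b1 b2 by linarith
  also have "\<dots> = (9 * real CARD('n)^2 * K^3 + K^2) * h * w^2" by (simp add: algebra_simps power2_eq_square power3_eq_cube)
  finally show ?thesis by (simp add: w_def)
qed

end


context LS begin

lemma Bcont: "continuous_on UNIV B"
  by (rule continuous_at_imp_continuous_on) (use has_derivative_continuous[OF B_d] in auto)

lemma det_nz: "det (B z) \<noteq> 0" using B_inv invertible_det_nz by blast

lemma det_sign: "0 < det (B x) * det (B y)"
proof (rule ccontr)
  assume "\<not> 0 < det (B x) * det (B y)"
  moreover have "det (B x) * det (B y) \<noteq> 0" using det_nz by simp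
  ultimately have neg: "det (B x) * det (B y) < 0" by linarith
  let ?S = "(\<lambda>z. det (B z)) ` UNIV"
  have con: "connected ?S" by (rule connected_continuous_image[OF continuous_on_det[OF Bcont] connected_UNIV])
  have mn: "min (det (B x)) (det (B y)) \<in> ?S" "max (det (B x)) (det (B y)) \<in> ?S" by (auto simp: min_def max_def)
  have "min (det (B x)) (det (B y)) \<le> 0" "0 \<le> max (det (B x)) (det (B y))"
    using neg by (auto simp: min_def max_def mult_less_0_iff)
  then have "0 \<in> ?S" using con mn unfolding connected_iff_interval by blast
  then show False using det_nz by auto
qed

lemma det_upper: "\<bar>det (B z)\<bar> \<le> fact CARD('n) * K ^ CARD('n)"
proof -
  have "\<bar>det (B z)\<bar> \<le> fact CARD('n) * norm (B z) ^ CARD('n)" by (rule det_bound)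
  also have "\<dots> \<le> fact CARD('n) * K ^ CARD('n)"
    by (intro mult_left_mono power_mono B_b) auto
  finally show ?thesis .
qed

lemma Dm_pos: "1 \<le> fact CARD('n) * K ^ CARD('n)"
proof -
  have "(1::real) \<le> fact CARD('n)" by simp
  moreover have "1 \<le> K ^ CARD('n)" using K1 by (simp add: one_le_power)
  ultimately show ?thesis by (metis mult_mono' mult_1_right zero_le_one order_trans)
qed

lemma det_lower: "1 / (fact CARD('n) * K ^ CARD('n)) \<le> \<bar>det (B z)\<bar>"
proof -
  define Dm where "Dm = fact CARD('n) * K ^ CARD('n)"
  have "det (B z) * det (matrix_inv (B z)) = 1"
    by (simp add: det_mul[symmetric] inv_props[OF B_inv])
  then have p: "\<bar>det (B z)\<bar> * \<bar>det (matrix_inv (B z))\<bar> = 1" by (metis abs_mult abs_one)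
  have "\<bar>det (matrix_inv (B z))\<bar> \<le> fact CARD('n) * norm (matrix_inv (B z)) ^ CARD('n)" by (rule det_bound)
  also have "\<dots> \<le> Dm" unfolding Dm_def by (intro mult_left_mono power_mono Bi_b) auto
  finally have q: "\<bar>det (matrix_inv (B z))\<bar> \<le> Dm" .
  have D0: "0 < Dm" using Dm_pos by (simp add: Dm_def)
  have "1 = \<bar>det (B z)\<bar> * \<bar>det (matrix_inv (B z))\<bar>" using p by simp
  also have "\<dots> \<le> \<bar>det (B z)\<bar> * Dm" using q by (intro mult_left_mono) auto
  finally show ?thesis using D0 by (simp add: Dm_def[symmetric] field_simps)
qed

lemma lndet_abs: "\<bar>ln \<bar>det (B z)\<bar>\<bar> \<le> ln (fact CARD('n) * K ^ CARD('n))"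
proof -
  define Dm where "Dm = fact CARD('n) * K ^ CARD('n)"
  have D1: "1 \<le> Dm" using Dm_pos by (simp add: Dm_def)
  have pos: "0 < \<bar>det (B z)\<bar>" using det_nz by simp
  have up: "ln \<bar>det (B z)\<bar> \<le> ln Dm" using det_upper[of z] pos D1 by (subst ln_le_cancel_iff) (auto simp: Dm_def)
  have "1 / Dm \<le> \<bar>det (B z)\<bar>" using det_lower by (simp add: Dm_def)
  then have "ln (1 / Dm) \<le> ln \<bar>det (B z)\<bar>" using D1 by (subst ln_le_cancel_iff) auto
  then have lo: "- ln Dm \<le> ln \<bar>det (B z)\<bar>" using D1 by (simp add: ln_div)
  show ?thesis using up lo by (simp add: Dm_def abs_le_iff)
qed

lemma Edet_b: "\<bar>ln (det (B x) / det (B (Xs x \<xi>)))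
   + sqrt (2*h) / 2 * trace (matrix_inv (Mh B x) ** DMh B (\<lambda>z. blinfun_apply (DB z)) x (uu x \<xi>))\<bar>
   \<le> (cld CARD('n) (2 * ln (fact CARD('n) * K ^ CARD('n))) * (real CARD('n)^3 * K^2)^2 * (9 * real CARD('n)^2 * K^2)
      + real CARD('n)^4 * K^2 * (9 * real CARD('n)^2 * K^2) + real CARD('n)^4 * K^3) * h * (1 + norm \<xi>)^2"
proof -
  define N where "N = real CARD('n)"
  define Ld where "Ld = 2 * ln (fact CARD('n) * K ^ CARD('n))"
  define y where "y = Xs x \<xi>"
  define d where "d = y - x"
  define Bi where "Bi = matrix_inv (B x)"
  define A where "A = Bi ** (B y - B x)"
  define u where "u = uu x \<xi>"
  define w where "w = 1 + norm \<xi>"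
  define g where "g = h *\<^sub>R G (Xt x \<xi>)"
  have N1: "1 \<le> N" by (simp add: N_def)
  have w1: "1 \<le> w" by (simp add: w_def)
  have Ld0: "0 \<le> Ld" using Dm_pos by (simp add: Ld_def)
  have cld0: "0 \<le> cld CARD('n) Ld" using Ld0 by (simp add: cld_def)
  have By: "B y = B x ** (mat 1 + A)"
    by (simp add: A_def Bi_def matrix_add_ldistrib matrix_mul_assoc inv_props[OF B_inv])
  have detA: "det (B y) = det (B x) * det (mat 1 + A)" using By by (simp add: det_mul)
  have dx: "det (B x) \<noteq> 0" by (rule det_nz)
  have dpos: "0 < det (mat 1 + A)"
  proof -
    have "0 < det (B x) * det (B y)" by (rule det_sign)
    also have "det (B x) * det (B y) = (det (B x))^2 * det (mat 1 + A)" by (simp add: detA power2_eq_square)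
    finally show ?thesis using dx by (simp add: zero_less_mult_iff)
  qed
  have lnA: "ln (det (mat 1 + A)) = ln \<bar>det (B y)\<bar> - ln \<bar>det (B x)\<bar>"
  proof -
    have "det (mat 1 + A) = \<bar>det (B y)\<bar> / \<bar>det (B x)\<bar>" using detA dpos dx by (simp add: abs_mult)
    then show ?thesis using dx det_nz[of y] by (simp add: ln_div)
  qed
  have Lb: "\<bar>ln (det (mat 1 + A))\<bar> \<le> Ld"
    unfolding lnA Ld_def using lndet_abs[of y] lndet_abs[of x] by linarith
  have key1: "\<bar>ln (det (mat 1 + A)) - trace A\<bar> \<le> cld CARD('n) Ld * norm A ^ 2"
    by (rule ln_det_I_plus'[OF dpos Lb])
  have nA: "norm A \<le> N^3 * K * (K * norm d)"
    unfolding A_def N_def Bi_def d_def by (rule mm_le[OF Bi_b LB])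
  have d2: "norm d ^ 2 \<le> 9 * N^2 * K^2 * h * w^2" unfolding d_def y_def N_def w_def by (rule d2_b)
  have nA2: "norm A ^ 2 \<le> (N^3 * K^2)^2 * (9 * N^2 * K^2 * h * w^2)"
  proof -
    have "norm A ^ 2 \<le> (N^3 * K * (K * norm d))^2" by (rule power_mono[OF nA norm_ge_zero])
    also have "\<dots> = (N^3 * K^2)^2 * norm d ^ 2" by (simp add: power_mult_distrib power2_eq_square)
    also have "\<dots> \<le> (N^3 * K^2)^2 * (9 * N^2 * K^2 * h * w^2)" by (intro mult_left_mono d2) auto
    finally show ?thesis .
  qed
  have T: "trace (matrix_inv (Mh B x) ** DMh B (\<lambda>z. blinfun_apply (DB z)) x u) = 2 * trace (Bi ** DB x u)"
    unfolding Mh_def DMh_def Bi_def by (rule trace_id[OF B_inv])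
  have rat: "ln (det (B x) / det (B y)) = - ln (det (mat 1 + A))"
  proof -
    have "det (B x) / det (B y) = 1 / det (mat 1 + A)" using detA dx by simp
    then show ?thesis using dpos by (simp add: ln_div)
  qed
  have dsplit: "DB x (sqrt (2*h) *\<^sub>R u) = DB x d - DB x g"
    unfolding d_def y_def d_eq u_def g_def by (simp add: blinfun.add_right)
  have tsc: "sqrt (2*h) / 2 * (2 * trace (Bi ** DB x u)) = trace (Bi ** DB x (sqrt (2*h) *\<^sub>R u))"
    by (simp add: blinfun.scaleR_right mm_scale_r trace_scaleR)
  have E: "ln (det (B x) / det (B y)) + sqrt (2*h) / 2 * trace (matrix_inv (Mh B x) ** DMh B (\<lambda>z. blinfun_apply (DB z)) x u)
     = - (ln (det (mat 1 + A)) - trace A) - trace (Bi ** (B y - B x - DB x d)) - trace (Bi ** DB x g)"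
    unfolding rat T tsc dsplit by (simp add: A_def mm_diff_l trace_sub)
  have b2: "\<bar>trace (Bi ** (B y - B x - DB x d))\<bar> \<le> N * (N^3 * K * (K * norm d ^ 2))"
  proof -
    have "\<bar>trace (Bi ** (B y - B x - DB x d))\<bar> \<le> N * norm (Bi ** (B y - B x - DB x d))"
      unfolding N_def by (rule trace_le)
    also have "\<dots> \<le> N * (N^3 * K * (K * norm d ^ 2))"
      unfolding N_def Bi_def d_def by (intro mult_left_mono mm_le[OF Bi_b LinB]) auto
    finally show ?thesis .
  qed
  have b3: "\<bar>trace (Bi ** DB x g)\<bar> \<le> N * (N^3 * K * (K * (h * K)))"
  proof -
    have gb: "norm g \<le> h * K" unfolding g_def using h_pos G_b by (simp add: mult_left_mono)
    have "\<bar>trace (Bi ** DB x g)\<bar> \<le> N * norm (Bi ** DB x g)"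
      unfolding N_def by (rule trace_le)
    also have "\<dots> \<le> N * (N^3 * K * (K * (h * K)))"
      unfolding N_def Bi_def by (intro mult_left_mono mm_le[OF Bi_b] blin_le[OF DB_b gb]) auto
    finally show ?thesis .
  qed
  have hw: "h \<le> h * w^2" using h_pos w1 by (simp add: one_le_power)
  have "\<bar>ln (det (B x) / det (B y)) + sqrt (2*h) / 2 * trace (matrix_inv (Mh B x) ** DMh B (\<lambda>z. blinfun_apply (DB z)) x u)\<bar>
     \<le> cld CARD('n) Ld * norm A ^ 2 + N * (N^3 * K * (K * norm d ^ 2)) + N * (N^3 * K * (K * (h * K)))"
    unfolding E using key1 b2 b3 by linarith
  also have "\<dots> \<le> cld CARD('n) Ld * ((N^3 * K^2)^2 * (9 * N^2 * K^2 * h * w^2))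
      + N * (N^3 * K * (K * (9 * N^2 * K^2 * h * w^2))) + N * (N^3 * K * (K * (h * w^2 * K)))"
    using K0 N1 h_pos
    by (intro add_mono mult_left_mono cld0 nA2 d2 hw mult_right_mono order_refl) auto
  also have "\<dots> = (cld CARD('n) Ld * (N^3 * K^2)^2 * (9 * N^2 * K^2)
      + N^4 * K^2 * (9 * N^2 * K^2) + N^4 * K^3) * h * w^2"
    by (simp add: algebra_simps power2_eq_square power3_eq_cube power4_eq_xxxx)
  finally show ?thesis by (simp add: N_def Ld_def w_def y_def u_def)
qed

end


lemma wpow: fixes w :: real assumes "1 \<le> w" "k \<le> 4" shows "w ^ k \<le> w ^ 4"
  using assms by (intro power_increasing) auto

context LS begin

lemma Eeta_b: fixes x \<xi> :: "real^'n"
  defines "\<eta> \<equiv> matrix_inv (B (Xs x \<xi>)) *v (B x *v \<xi> + sqrt (2*h) *\<^sub>R G (Xt x \<xi>))"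
  defines "v \<equiv> transpose (matrix_inv (B x)) *v \<xi>"
  shows "\<bar>(norm \<eta>)^2 / 2 - (norm \<xi>)^2 / 2 - sqrt (2*h) * ((matrix_inv (Mh B x) *v G x) \<bullet> uu x \<xi>)
     + sqrt (2*h) / 2 * DMh3 B (\<lambda>z. blinfun_apply (DB z)) x (uu x \<xi>) v v\<bar>
   \<le> (9 * real CARD('n)^10 * K^6 + 9 * real CARD('n)^4 * K^4 + real CARD('n)^2 * K^3
      + 2 * (3 * real CARD('n)^8 * K^5 + real CARD('n)^2 * K^3)
      + (2 * real CARD('n) * K^2 + 3 * real CARD('n)^3 * K^3)^2 / 2) * h * (1 + norm \<xi>)^4"
proof -
  define N where "N = real CARD('n)"
  define y where "y = Xs x \<xi>"
  define d where "d = y - x"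
  define Bx where "Bx = B x"
  define Bs where "Bs = B y"
  define Bix where "Bix = matrix_inv (B x)"
  define Bis where "Bis = matrix_inv (B y)"
  define E where "E = Bs - Bx"
  define Gt where "Gt = G (Xt x \<xi>)"
  define Gx where "Gx = G x"
  define u where "u = uu x \<xi>"
  define D where "D = DB x u"
  define s2 where "s2 = sqrt (2*h)"
  define s where "s = sqrt h"
  define w where "w = 1 + norm \<xi>"
  define g where "g = h *\<^sub>R Gt"
  define r where "r = s2 *\<^sub>R (Bis *v Gt) - Bis *v (E *v \<xi>)"
  define P where "P = Bis *v (E *v \<xi>) - Bix *v (DB x (s2 *\<^sub>R u) *v \<xi>)"
  define Q where "Q = Bis *v Gt - Bix *v Gx"
  have N1: "1 \<le> N" by (simp add: N_def)
  have w1: "1 \<le> w" by (simp add: w_def)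
  have xw: "norm \<xi> \<le> w" by (simp add: w_def)
  have s0: "0 \<le> s" using h_pos by (simp add: s_def)
  have ss: "s * s = h" using s_facts by (simp add: s_def)
  have s2b: "s2 \<le> 2 * s" using s_facts by (simp add: s2_def s_def)
  have s20: "0 \<le> s2" using h_pos by (simp add: s2_def)
  have eta: "\<eta> = \<xi> + r"
  proof -
    have "Bis *v (Bx *v \<xi>) = Bis *v (Bs *v \<xi>) - Bis *v (E *v \<xi>)"
      by (simp add: E_def matrix_vector_mult_diff_rdistrib matrix_vector_mult_diff_distrib)
    also have "Bis *v (Bs *v \<xi>) = \<xi>"
      by (simp add: Bis_def Bs_def matrix_vector_mul_assoc inv_props[OF B_inv])
    finally have a: "Bis *v (Bx *v \<xi>) = \<xi> - Bis *v (E *v \<xi>)" .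
    show ?thesis unfolding \<eta>_def
      by (simp add: a r_def matrix_vector_right_distrib matrix_vector_mult_scaleR
           Bis_def[symmetric] Bx_def[symmetric] y_def[symmetric] s2_def[symmetric] Gt_def[symmetric])
  qed
  have sq: "(norm \<eta>)^2 / 2 - (norm \<xi>)^2 / 2 = \<xi> \<bullet> r + (norm r)^2 / 2"
    unfolding eta by (simp add: power2_norm_eq_inner inner_add_left inner_add_right inner_commute field_simps)
  have Gid: "(matrix_inv (Mh B x) *v G x) \<bullet> uu x \<xi> = \<xi> \<bullet> (Bix *v Gx)"
    unfolding Mh_def uu_def Bix_def Gx_def by (rule G_id[OF B_inv])
  have D3: "DMh3 B (\<lambda>z. blinfun_apply (DB z)) x (uu x \<xi>) v v = 2 * (\<xi> \<bullet> (Bix *v (D *v \<xi>)))"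
    unfolding DMh3_def DMh_def v_def Bix_def D_def u_def by (rule D3_id[OF B_inv])
  have sD: "DB x (s2 *\<^sub>R u) *v \<xi> = s2 *\<^sub>R (D *v \<xi>)"
    by (simp add: D_def blinfun.scaleR_right scaleR_matrix_vector_assoc)
  have E1: "(norm \<eta>)^2 / 2 - (norm \<xi>)^2 / 2 - sqrt (2*h) * ((matrix_inv (Mh B x) *v G x) \<bullet> uu x \<xi>)
     + sqrt (2*h) / 2 * DMh3 B (\<lambda>z. blinfun_apply (DB z)) x (uu x \<xi>) v v
     = s2 * (\<xi> \<bullet> Q) - \<xi> \<bullet> P + (norm r)^2 / 2"
    unfolding sq Gid D3 s2_def[symmetric]
    by (simp add: P_def Q_def r_def sD inner_diff_right inner_add_right matrix_vector_mult_scaleR algebra_simps)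
  have dsplit: "DB x (s2 *\<^sub>R u) = DB x d - DB x g"
    unfolding d_def y_def d_eq u_def g_def s2_def Gt_def by (simp add: blinfun.add_right)
  have Pdec: "P = (Bis - Bix) *v (E *v \<xi>) + Bix *v ((E - DB x d) *v \<xi>) + Bix *v (DB x g *v \<xi>)"
    unfolding P_def dsplit by (simp add: algebra_simps)
  have Qdec: "Q = (Bis - Bix) *v Gt + Bix *v (Gt - Gx)"
    unfolding Q_def by (simp add: algebra_simps)
  have nd: "norm d \<le> 3 * N * K * s * w" unfolding d_def y_def N_def s_def w_def by (rule d_b)
  have nd2: "norm d ^ 2 \<le> 9 * N^2 * K^2 * h * w^2" unfolding d_def y_def N_def w_def by (rule d2_b)
  have nE: "norm E \<le> K * norm d" unfolding E_def Bs_def Bx_def d_def by (rule LB)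
  have nBi: "norm (Bis - Bix) \<le> N^6 * K^3 * norm d" unfolding Bis_def Bix_def N_def d_def by (rule LBi)
  have nBix: "norm Bix \<le> K" "norm Bis \<le> K" by (simp_all add: Bix_def Bis_def Bi_b)
  have nEx: "norm (E *v \<xi>) \<le> N * (K * norm d) * w" unfolding N_def by (rule mv_le[OF nE xw])
  have nGt: "norm Gt \<le> K" by (simp add: Gt_def G_b)
  have ng: "norm g \<le> h * K" unfolding g_def using h_pos nGt by (simp add: mult_left_mono)
  have nXt: "norm (Xt x \<xi> - x) \<le> N * K * s * w" unfolding N_def s_def w_def by (rule Xt_b)
  have P1: "norm ((Bis - Bix) *v (E *v \<xi>)) \<le> N * (N^6 * K^3 * norm d) * (N * (K * norm d) * w)"
    unfolding N_def by (rule mv_le[OF nBi[unfolded N_def] nEx[unfolded N_def]])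
  have P2: "norm (Bix *v ((E - DB x d) *v \<xi>)) \<le> N * K * (N * (K * norm d ^ 2) * w)"
  proof -
    have "norm (E - DB x d) \<le> K * norm d ^ 2" unfolding E_def Bs_def Bx_def d_def by (rule LinB)
    then have "norm ((E - DB x d) *v \<xi>) \<le> N * (K * norm d ^ 2) * w" unfolding N_def by (rule mv_le[OF _ xw])
    then show ?thesis unfolding N_def by (rule mv_le[OF nBix(1)])
  qed
  have P3: "norm (Bix *v (DB x g *v \<xi>)) \<le> N * K * (N * (K * (h * K)) * w)"
  proof -
    have "norm (DB x g) \<le> K * (h * K)" by (rule blin_le[OF DB_b ng])
    then have "norm (DB x g *v \<xi>) \<le> N * (K * (h * K)) * w" unfolding N_def by (rule mv_le[OF _ xw])
    then show ?thesis unfolding N_def by (rule mv_le[OF nBix(1)])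
  qed
  have Q1: "norm ((Bis - Bix) *v Gt) \<le> N * (N^6 * K^3 * norm d) * K"
    unfolding N_def by (rule mv_le[OF nBi[unfolded N_def] nGt])
  have Q2: "norm (Bix *v (Gt - Gx)) \<le> N * K * (K * (N * K * s * w))"
  proof -
    have "norm (Gt - Gx) \<le> K * norm (Xt x \<xi> - x)" unfolding Gt_def Gx_def by (rule LG)
    also have "\<dots> \<le> K * (N * K * s * w)" using nXt K0 by (rule mult_left_mono)
    finally show ?thesis unfolding N_def by (rule mv_le[OF nBix(1)])
  qed
  have rb: "norm r \<le> s2 * (N * K * K) + N * K * (N * (K * norm d) * w)"
  proof -
    have "norm r \<le> norm (s2 *\<^sub>R (Bis *v Gt)) + norm (Bis *v (E *v \<xi>))"
      unfolding r_def by (rule norm_triangle_ineq4)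
    also have "\<dots> = s2 * norm (Bis *v Gt) + norm (Bis *v (E *v \<xi>))" using s20 by simp
    also have "\<dots> \<le> s2 * (N * K * K) + N * K * (N * (K * norm d) * w)"
      using s20 by (intro add_mono mult_left_mono) (auto simp: N_def intro: mv_le[OF nBix(2) nGt] mv_le[OF nBix(2) nEx[unfolded N_def]])
    finally show ?thesis .
  qed
  have K0': "0 \<le> K" by (rule K0)
  have N0: "0 \<le> N" using N1 by simp
  have nd0: "0 \<le> norm d" by simp
  have hw2: "h * w^2 \<le> h * w^4" using h_pos w1 by (intro mult_left_mono wpow) auto
  have hw1: "h * w \<le> h * w^4" using h_pos w1 by (intro mult_left_mono) (auto simp: wpow[of w 1, simplified])
  have t1: "w * norm ((Bis - Bix) *v (E *v \<xi>)) \<le> 9 * N^10 * K^6 * h * w^4"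
  proof -
    have "w * norm ((Bis - Bix) *v (E *v \<xi>)) \<le> w * (N * (N^6 * K^3 * norm d) * (N * (K * norm d) * w))"
      using P1 w1 by (intro mult_left_mono) auto
    also have "\<dots> = N^8 * K^4 * w^2 * norm d ^ 2" by (simp add: power2_eq_square algebra_simps power_def)
    also have "\<dots> \<le> N^8 * K^4 * w^2 * (9 * N^2 * K^2 * h * w^2)" using nd2 w1 N0 K0' by (intro mult_left_mono) auto
    also have "\<dots> = 9 * N^10 * K^6 * h * w^4" by (simp add: power2_eq_square algebra_simps power_def)
    finally show ?thesis .
  qed
  have t2: "w * norm (Bix *v ((E - DB x d) *v \<xi>)) \<le> 9 * N^4 * K^4 * h * w^4"
  proof -
    have "w * norm (Bix *v ((E - DB x d) *v \<xi>)) \<le> w * (N * K * (N * (K * norm d ^ 2) * w))"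
      using P2 w1 by (intro mult_left_mono) auto
    also have "\<dots> = N^2 * K^2 * w^2 * norm d ^ 2" by (simp add: power2_eq_square algebra_simps)
    also have "\<dots> \<le> N^2 * K^2 * w^2 * (9 * N^2 * K^2 * h * w^2)" using nd2 w1 N0 K0' by (intro mult_left_mono) auto
    also have "\<dots> = 9 * N^4 * K^4 * h * w^4" by (simp add: power2_eq_square algebra_simps power_def)
    finally show ?thesis .
  qed
  have t3: "w * norm (Bix *v (DB x g *v \<xi>)) \<le> N^2 * K^3 * h * w^4"
  proof -
    have "w * norm (Bix *v (DB x g *v \<xi>)) \<le> w * (N * K * (N * (K * (h * K)) * w))"
      using P3 w1 by (intro mult_left_mono) auto
    also have "\<dots> = N^2 * K^3 * (h * w^2)" by (simp add: power2_eq_square power3_eq_cube algebra_simps)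
    also have "\<dots> \<le> N^2 * K^3 * (h * w^4)" by (rule mult_left_mono[OF hw2]) (use N0 K0' in auto)
    finally show ?thesis by (simp add: mult_ac)
  qed
  have t4: "s2 * (w * norm Q) \<le> 2 * (3 * N^8 * K^5 + N^2 * K^3) * h * w^4"
  proof -
    have nQ: "norm Q \<le> N * (N^6 * K^3 * (3 * N * K * s * w)) * K + N * K * (K * (N * K * s * w))"
    proof -
      have "norm Q \<le> norm ((Bis - Bix) *v Gt) + norm (Bix *v (Gt - Gx))" unfolding Qdec by (rule norm_triangle_ineq)
      also have "\<dots> \<le> N * (N^6 * K^3 * norm d) * K + N * K * (K * (N * K * s * w))" using Q1 Q2 by (rule add_mono)
      also have "\<dots> \<le> N * (N^6 * K^3 * (3 * N * K * s * w)) * K + N * K * (K * (N * K * s * w))"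
        using nd N0 K0' by (intro add_mono mult_right_mono mult_left_mono order_refl) auto
      finally show ?thesis .
    qed
    have "s2 * (w * norm Q) \<le> (2 * s) * (w * (N * (N^6 * K^3 * (3 * N * K * s * w)) * K + N * K * (K * (N * K * s * w))))"
      using nQ s2b s0 w1 by (intro mult_mono mult_left_mono) auto
    also have "\<dots> = 2 * (3 * N^8 * K^5 + N^2 * K^3) * (s * s) * w^2"
      by (simp add: power2_eq_square algebra_simps power_def)
    also have "\<dots> = 2 * (3 * N^8 * K^5 + N^2 * K^3) * (h * w^2)" using ss by (simp add: mult.assoc)
    also have "\<dots> \<le> 2 * (3 * N^8 * K^5 + N^2 * K^3) * (h * w^4)"
      by (rule mult_left_mono[OF hw2]) (use N0 K0' in auto)
    finally show ?thesis by (simp add: mult_ac)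
  qed
  have t5: "(norm r)^2 / 2 \<le> (2 * N * K^2 + 3 * N^3 * K^3)^2 / 2 * h * w^4"
  proof -
    have "norm r \<le> s2 * (N * K * K) + N * K * (N * (K * (3 * N * K * s * w)) * w)"
      using rb nd N0 K0' w1 by (smt (verit) mult_left_mono mult_right_mono mult_nonneg_nonneg)
    also have "\<dots> \<le> (2 * s) * (N * K * K) + N * K * (N * (K * (3 * N * K * s * w)) * w)"
      using s2b N0 K0' s0 w1 by (intro add_mono mult_right_mono order_refl) auto
    also have "\<dots> \<le> (2 * s) * (N * K * K) * w^2 + N * K * (N * (K * (3 * N * K * s * w)) * w)"
    proof -
      have "1 \<le> w^2" using w1 by (simp add: one_le_power)
      then have "(2 * s) * (N * K * K) * 1 \<le> (2 * s) * (N * K * K) * w^2" using s0 N0 K0' by (intro mult_left_mono) auto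
      then show ?thesis by simp
    qed
    also have "\<dots> = (2 * N * K^2 + 3 * N^3 * K^3) * (s * w^2)"
      by (simp add: power2_eq_square power3_eq_cube algebra_simps)
    finally have "norm r \<le> (2 * N * K^2 + 3 * N^3 * K^3) * (s * w^2)" .
    then have "(norm r)^2 \<le> ((2 * N * K^2 + 3 * N^3 * K^3) * (s * w^2))^2" by (rule power_mono) simp
    also have "\<dots> = (2 * N * K^2 + 3 * N^3 * K^3)^2 * (s * s) * w^4"
      by (simp add: power2_eq_square power_def algebra_simps)
    finally show ?thesis using ss by simp
  qed
  have "\<bar>s2 * (\<xi> \<bullet> Q) - \<xi> \<bullet> P + (norm r)^2 / 2\<bar> \<le> s2 * (w * norm Q) + w * norm P + (norm r)^2 / 2"
  proof -
    have a: "\<bar>\<xi> \<bullet> Q\<bar> \<le> w * norm Q" by (rule dot_le[OF xw order_refl])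
    have b: "\<bar>\<xi> \<bullet> P\<bar> \<le> w * norm P" by (rule dot_le[OF xw order_refl])
    have c: "\<bar>s2 * (\<xi> \<bullet> Q)\<bar> \<le> s2 * (w * norm Q)" using a s20 by (simp add: abs_mult mult_left_mono)
    have r0: "0 \<le> (norm r)^2 / 2" by simp
    have "\<bar>s2 * (\<xi> \<bullet> Q) - \<xi> \<bullet> P + (norm r)^2 / 2\<bar> \<le> \<bar>s2 * (\<xi> \<bullet> Q) - \<xi> \<bullet> P\<bar> + \<bar>(norm r)^2 / 2\<bar>"
      by (rule abs_triangle_ineq)
    also have "\<dots> \<le> \<bar>s2 * (\<xi> \<bullet> Q)\<bar> + \<bar>\<xi> \<bullet> P\<bar> + \<bar>(norm r)^2 / 2\<bar>"
      using abs_triangle_ineq4[of "s2 * (\<xi> \<bullet> Q)" "\<xi> \<bullet> P"] by linarith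
    finally show ?thesis using c b abs_of_nonneg[OF r0] by linarith
  qed
  also have "\<dots> \<le> 2 * (3 * N^8 * K^5 + N^2 * K^3) * h * w^4
      + (9 * N^10 * K^6 * h * w^4 + 9 * N^4 * K^4 * h * w^4 + N^2 * K^3 * h * w^4)
      + (2 * N * K^2 + 3 * N^3 * K^3)^2 / 2 * h * w^4"
  proof -
    have "norm P \<le> norm ((Bis - Bix) *v (E *v \<xi>)) + norm (Bix *v ((E - DB x d) *v \<xi>)) + norm (Bix *v (DB x g *v \<xi>))"
      unfolding Pdec by (meson norm_triangle_ineq order_trans add_mono order_refl)
    then have "w * norm P \<le> w * norm ((Bis - Bix) *v (E *v \<xi>)) + w * norm (Bix *v ((E - DB x d) *v \<xi>)) + w * norm (Bix *v (DB x g *v \<xi>))"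
      using w1 by (simp add: distrib_left[symmetric] mult_left_mono)
    then show ?thesis using t1 t2 t3 t4 t5 by linarith
  qed
  also have "\<dots> = (9 * N^10 * K^6 + 9 * N^4 * K^4 + N^2 * K^3 + 2 * (3 * N^8 * K^5 + N^2 * K^3)
      + (2 * N * K^2 + 3 * N^3 * K^3)^2 / 2) * h * w^4" by (simp add: algebra_simps)
  finally show ?thesis unfolding E1 by (simp add: N_def w_def)
qed

end


definition CdetF :: "nat \<Rightarrow> real \<Rightarrow> real" where
  "CdetF n K = cld n (2 * ln (fact n * K ^ n)) * (real n^3 * K^2)^2 * (9 * real n^2 * K^2)
      + real n^4 * K^2 * (9 * real n^2 * K^2) + real n^4 * K^3"
definition CetaF :: "nat \<Rightarrow> real \<Rightarrow> real" where
  "CetaF n K = 9 * real n^10 * K^6 + 9 * real n^4 * K^4 + real n^2 * K^3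
      + 2 * (3 * real n^8 * K^5 + real n^2 * K^3)
      + (2 * real n * K^2 + 3 * real n^3 * K^3)^2 / 2"
definition CUF :: "nat \<Rightarrow> real \<Rightarrow> real" where
  "CUF n K = 9 * real n^2 * K^3 + K^2"
definition Ctot :: "nat \<Rightarrow> real \<Rightarrow> real \<Rightarrow> real" where
  "Ctot n K \<beta> = CdetF n K + \<beta> * (CetaF n K + CUF n K)"

lemma arith_aux: fixes \<beta> L A Bq Uy Ux s g m T D :: real assumes "\<beta> \<noteq> 0"
  shows "(L - \<beta> * (A - Bq + Uy - Ux)) - (- \<beta> * (s * g + s * m + s * (inverse \<beta> / 2) * T - s * (1/2) * D))
     = (L + s / 2 * T) - \<beta> * (A - Bq - s * m + s / 2 * D) - \<beta> * (Uy - Ux - s * g)"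
  using assms by (simp add: field_simps)

lemma abs_aux: fixes \<beta> x y z :: real assumes "0 < \<beta>"
  shows "\<bar>x - \<beta> * y - \<beta> * z\<bar> \<le> \<bar>x\<bar> + \<beta> * \<bar>y\<bar> + \<beta> * \<bar>z\<bar>"
proof -
  have "\<bar>x - \<beta> * y - \<beta> * z\<bar> \<le> \<bar>x\<bar> + \<bar>\<beta> * y\<bar> + \<bar>\<beta> * z\<bar>" by linarith
  then show ?thesis using assms by (simp add: abs_mult)
qed

context LS begin

lemma point_b: "\<bar>alpha_h \<beta> U G B h x \<xi> - alpha_tilde_h \<beta> gU G B (\<lambda>z. blinfun_apply (DB z)) h x \<xi>\<bar>
   \<le> Ctot CARD('n) K \<beta> * h * (1 + norm \<xi>)^4"
proof -
  define y where "y = Xs x \<xi>"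
  define \<eta> where "\<eta> = matrix_inv (B y) *v (B x *v \<xi> + sqrt (2*h) *\<^sub>R G (Xt x \<xi>))"
  define v where "v = transpose (matrix_inv (B x)) *v \<xi>"
  define u where "u = uu x \<xi>"
  define T where "T = trace (matrix_inv (Mh B x) ** DMh B (\<lambda>z. blinfun_apply (DB z)) x u)"
  define D3 where "D3 = DMh3 B (\<lambda>z. blinfun_apply (DB z)) x u v v"
  define w where "w = 1 + norm \<xi>"
  define a where "a = ln (det (B x) / det (B y)) - \<beta> * ((norm \<eta>)^2 / 2 - (norm \<xi>)^2 / 2 + U y - U x)"
  define \<Gamma> where "\<Gamma> = Gamma_h \<beta> gU G B (\<lambda>z. blinfun_apply (DB z)) h x \<xi>"
  have w1: "1 \<le> w" by (simp add: w_def)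
  have rpos: "0 < det (B x) / det (B y)"
    using det_sign[of x y] by (simp add: zero_less_mult_iff zero_less_divide_iff)
  have alpha: "alpha_h \<beta> U G B h x \<xi> = min 1 (exp a)"
  proof -
    have "alpha_h \<beta> U G B h x \<xi> = min 1 (det (B x) / det (B y) *
          exp (- \<beta> * ((norm \<eta>)^2 / 2 - (norm \<xi>)^2 / 2 + U y - U x)))"
      unfolding alpha_h_def Let_def y_def \<eta>_def Xs_def Xt_def uu_def by (rule refl)
    also have "det (B x) / det (B y) * exp (- \<beta> * ((norm \<eta>)^2 / 2 - (norm \<xi>)^2 / 2 + U y - U x)) = exp a"
    proof -
      have "a = ln (det (B x) / det (B y)) + (- \<beta> * ((norm \<eta>)^2 / 2 - (norm \<xi>)^2 / 2 + U y - U x))"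
        by (simp only: a_def diff_conv_add_uminus mult_minus_left)
      then have "exp a = exp (ln (det (B x) / det (B y))) * exp (- \<beta> * ((norm \<eta>)^2 / 2 - (norm \<xi>)^2 / 2 + U y - U x))"
        by (simp only: exp_add)
      then show ?thesis using rpos by simp
    qed
    finally show ?thesis .
  qed
  have atil: "alpha_tilde_h \<beta> gU G B (\<lambda>z. blinfun_apply (DB z)) h x \<xi> = min 1 (exp (- \<beta> * \<Gamma>))"
    by (simp add: alpha_tilde_h_def \<Gamma>_def)
  have Gam: "\<Gamma> = sqrt (2*h) * (gU x \<bullet> u) + sqrt (2*h) * ((matrix_inv (Mh B x) *v G x) \<bullet> u)
      + sqrt (2*h) * (inverse \<beta> / 2) * T - sqrt (2*h) * (1/2) * D3"
    unfolding \<Gamma>_def Gamma_h_def T_def D3_def u_def uu_def v_def by (simp only: inner_add_left distrib_left)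
  define Edet where "Edet = ln (det (B x) / det (B y)) + sqrt (2*h) / 2 * T"
  define Eeta where "Eeta = (norm \<eta>)^2 / 2 - (norm \<xi>)^2 / 2 - sqrt (2*h) * ((matrix_inv (Mh B x) *v G x) \<bullet> u)
     + sqrt (2*h) / 2 * D3"
  define EU where "EU = U y - U x - sqrt (2*h) * (gU x \<bullet> u)"
  have diff: "a - (- \<beta> * \<Gamma>) = Edet - \<beta> * Eeta - \<beta> * EU"
    unfolding Gam a_def Edet_def Eeta_def EU_def by (rule arith_aux) (use beta_pos in auto)
  have b1: "\<bar>Edet\<bar> \<le> CdetF CARD('n) K * h * w^2"
    unfolding Edet_def CdetF_def T_def u_def y_def w_def by (rule Edet_b)
  have b2: "\<bar>Eeta\<bar> \<le> CetaF CARD('n) K * h * w^4"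
    unfolding Eeta_def CetaF_def \<eta>_def y_def u_def D3_def v_def w_def by (rule Eeta_b)
  have b3: "\<bar>EU\<bar> \<le> CUF CARD('n) K * h * w^2"
    unfolding EU_def CUF_def y_def u_def w_def by (rule EU_b)
  have L0: "0 \<le> 2 * ln (fact CARD('n) * K ^ CARD('n))" using Dm_pos by simp
  have cld0: "0 \<le> cld CARD('n) (2 * ln (fact CARD('n) * K ^ CARD('n)))" using L0 by (simp add: cld_def)
  have c0: "0 \<le> CdetF CARD('n) K" "0 \<le> CUF CARD('n) K"
    unfolding CdetF_def CUF_def using cld0 K0 by (intro add_nonneg_nonneg mult_nonneg_nonneg; simp)+
  have hw: "h * w^2 \<le> h * w^4" using h_pos w1 by (intro mult_left_mono wpow) auto
  have b1': "\<bar>Edet\<bar> \<le> CdetF CARD('n) K * h * w^4"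
    using b1 mult_left_mono[OF hw c0(1)] by (simp add: mult.assoc)
  have b3': "\<bar>EU\<bar> \<le> CUF CARD('n) K * h * w^4"
    using b3 mult_left_mono[OF hw c0(2)] by (simp add: mult.assoc)
  have "\<bar>a - (- \<beta> * \<Gamma>)\<bar> \<le> \<bar>Edet\<bar> + \<beta> * \<bar>Eeta\<bar> + \<beta> * \<bar>EU\<bar>"
    unfolding diff by (rule abs_aux[OF beta_pos])
  also have "\<dots> \<le> CdetF CARD('n) K * h * w^4 + \<beta> * (CetaF CARD('n) K * h * w^4) + \<beta> * (CUF CARD('n) K * h * w^4)"
    using beta_pos b1' b2 b3' by (intro add_mono mult_left_mono) auto
  also have "\<dots> = Ctot CARD('n) K \<beta> * h * w^4" by (simp add: Ctot_def algebra_simps)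
  finally have ab: "\<bar>a - (- \<beta> * \<Gamma>)\<bar> \<le> Ctot CARD('n) K \<beta> * h * w^4" .
  show ?thesis unfolding alpha atil using minexp_lip[of a "- \<beta> * \<Gamma>"] ab by (simp add: w_def)
qed

end


lemma one_dim_finite: fixes c :: real assumes c: "0 < c"
  shows "(\<integral>\<^sup>+ t. ennreal (exp (- c * t^2)) \<partial>lborel) < \<infinity>"
proof -
  define \<sigma> where "\<sigma> = sqrt (1 / (2 * c))"
  have s0: "0 < \<sigma>" using c by (simp add: \<sigma>_def)
  have s2: "\<sigma>^2 = 1 / (2 * c)" using c by (simp add: \<sigma>_def)
  define k where "k = sqrt (2 * pi * \<sigma>^2)"
  have k0: "0 < k" using s0 by (simp add: k_def)
  have eq: "exp (- c * t^2) = k * normal_density 0 \<sigma> t" for t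
  proof -
    have "- c * t^2 = - (t^2) / (2 * \<sigma>^2)" using c by (simp add: s2 field_simps)
    then show ?thesis using k0 s0 by (simp add: normal_density_def k_def)
  qed
  have int: "integrable lborel (normal_density 0 \<sigma>)" using s0 by simp
  then have fin: "(\<integral>\<^sup>+ t. ennreal (norm (normal_density 0 \<sigma> t)) \<partial>lborel) < \<infinity>"
    by (simp add: integrable_iff_bounded)
  have "(\<integral>\<^sup>+ t. ennreal (exp (- c * t^2)) \<partial>lborel) = (\<integral>\<^sup>+ t. ennreal k * ennreal (normal_density 0 \<sigma> t) \<partial>lborel)"
  proof (rule nn_integral_cong)
    fix t :: real
    show "ennreal (exp (- c * t^2)) = ennreal k * ennreal (normal_density 0 \<sigma> t)"
      using k0 by (subst eq) (simp add: ennreal_mult')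
  qed
  also have "\<dots> = ennreal k * (\<integral>\<^sup>+ t. ennreal (normal_density 0 \<sigma> t) \<partial>lborel)"
    by (rule nn_integral_cmult) simp
  also have "\<dots> < \<infinity>" using fin by (simp add: ennreal_mult_less_top)
  finally show ?thesis .
qed

lemma gauss_dim_finite: fixes c :: real assumes c: "0 < c"
  shows "(\<integral>\<^sup>+ x. ennreal (exp (- c * norm (x :: real^'n)^2)) \<partial>lborel) < \<infinity>"
proof -
  have e: "ennreal (exp (- c * norm x^2)) = (\<Prod>b\<in>Basis. ennreal (exp (- c * (x \<bullet> b)^2)))" for x :: "real^'n"
  proof -
    have "norm x ^2 = x \<bullet> x" by (rule power2_norm_eq_inner)
    also have "\<dots> = (\<Sum>b\<in>Basis. (x \<bullet> b) * (x \<bullet> b))" by (rule euclidean_inner)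
    also have "\<dots> = (\<Sum>b\<in>Basis. (x \<bullet> b)^2)" by (simp add: power2_eq_square)
    finally have "norm x ^2 = (\<Sum>b\<in>Basis. (x \<bullet> b)^2)" .
    then have "- c * norm x^2 = (\<Sum>b\<in>Basis. - c * (x \<bullet> b)^2)" by (simp add: sum_distrib_left)
    then have "exp (- c * norm x^2) = (\<Prod>b\<in>Basis. exp (- c * (x \<bullet> b)^2))" by (simp add: exp_sum)
    then show ?thesis by (simp add: prod_ennreal)
  qed
  have "(\<integral>\<^sup>+ x. ennreal (exp (- c * norm (x :: real^'n)^2)) \<partial>lborel)
      = (\<integral>\<^sup>+ x. (\<Prod>b\<in>Basis. ennreal (exp (- c * ((x::real^'n) \<bullet> b)^2))) \<partial>lborel)"
    by (simp only: e)
  also have "\<dots> = (\<Prod>b\<in>(Basis :: (real^'n) set). (\<integral>\<^sup>+ t. ennreal (exp (- c * t^2)) \<partial>lborel))"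
    using nn_integral_lborel_prod[where f="\<lambda>b t. ennreal (exp (- c * t^2))" and 'a="real^'n"] by simp
  also have "\<dots> < \<infinity>" using one_dim_finite[OF c]
    by (simp add: power_less_top_ennreal)
  finally show ?thesis .
qed

lemma sq_lemma: fixes q :: real shows "(1 + q)^2 \<le> 2 * (1 + q^2)"
proof -
  have a: "(1 + q)^2 = 1 + 2*q + q^2" by (simp add: power2_eq_square algebra_simps)
  have b: "(1 - q)^2 = 1 - 2*q + q^2" by (simp add: power2_eq_square algebra_simps)
  have "2 * (1 + q^2) - (1 + q)^2 = (1 - q)^2" by (simp add: power2_eq_square algebra_simps)
  moreover have "0 \<le> (1 - q)^2" by simp
  ultimately show ?thesis by (metis diff_ge_0_iff_ge)
qed

lemma poly_le: fixes r :: real assumes "0 \<le> r" shows "(1 + r)^4 \<le> 8 * (1 + r^4)"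
proof -
  have e4: "(r^2)^2 = r^4" by (simp flip: power_mult)
  have "(1 + r)^4 = ((1 + r)^2)^2" by (simp flip: power_mult)
  also have "\<dots> \<le> (2 * (1 + r^2))^2" using sq_lemma[of r] by (intro power_mono) auto
  also have "\<dots> = 4 * (1 + r^2)^2" by (subst power_mult_distrib) simp
  also have "\<dots> \<le> 4 * (2 * (1 + (r^2)^2))" using sq_lemma[of "r^2"] by linarith
  finally show ?thesis unfolding e4 by linarith
qed

lemma pdf_bound: fixes \<xi> :: "real^'n" assumes b: "0 < \<beta>"
  shows "gauss_pdf \<beta> \<xi> * (1 + norm \<xi>)^4
    \<le> (\<beta> / (2 * pi)) powr (real CARD('n) / 2) * (8 * (1 + 64 / \<beta>^2)) * exp (- (\<beta>/4) * norm \<xi>^2)"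
proof -
  define r where "r = norm \<xi>"
  define y where "y = \<beta> * r^2 / 4"
  define c0 where "c0 = (\<beta> / (2 * pi)) powr (real CARD('n) / 2)"
  have r0: "0 \<le> r" by (simp add: r_def)
  have y0: "0 \<le> y" using b by (simp add: y_def)
  have c00: "0 \<le> c0" by (simp add: c0_def)
  have y2: "y^2 \<le> 4 * exp y"
  proof -
    have "y / 2 \<le> exp (y/2)" using exp_ge_add_one_self[of "y/2"] by linarith
    then have "(y/2)^2 \<le> (exp (y/2))^2" using y0 by (intro power_mono) auto
    also have "(exp (y/2))^2 = exp y" by (simp add: exp_double[symmetric])
    finally show ?thesis by (simp add: power_divide)
  qed
  have y2e: "y^2 = \<beta>^2 * r^4 / 16"
    by (simp add: y_def power_divide power_mult_distrib flip: power_mult)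
  have r4: "r^4 = 16 / \<beta>^2 * y^2"
    unfolding y2e using b by (simp add: field_simps)
  have ey1: "1 \<le> exp y" using y0 by simp
  have "(1 + r)^4 \<le> 8 * (1 + r^4)" by (rule poly_le[OF r0])
  also have "\<dots> \<le> 8 * (1 + 16 / \<beta>^2 * (4 * exp y))"
    unfolding r4 using y2 b by (intro mult_left_mono add_left_mono) auto
  also have "\<dots> \<le> 8 * (1 + 64 / \<beta>^2) * exp y"
  proof -
    have q: "16 / \<beta>^2 * (4 * exp y) = 64 / \<beta>^2 * exp y" by simp
    have q2: "(1 + 64 / \<beta>^2) * exp y = exp y + 64 / \<beta>^2 * exp y" by (simp add: algebra_simps)
    have l: "1 + 16 / \<beta>^2 * (4 * exp y) \<le> (1 + 64 / \<beta>^2) * exp y" unfolding q q2 using ey1 by linarith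
    have "8 * (1 + 16 / \<beta>^2 * (4 * exp y)) \<le> 8 * ((1 + 64 / \<beta>^2) * exp y)"
      by (rule mult_left_mono[OF l]) simp
    then show ?thesis by (simp only: mult.assoc)
  qed
  finally have p: "(1 + r)^4 \<le> 8 * (1 + 64 / \<beta>^2) * exp y" .
  have pdf: "gauss_pdf \<beta> \<xi> = c0 * exp (- 2 * y)"
    by (simp add: gauss_pdf_def c0_def y_def r_def)
  have "gauss_pdf \<beta> \<xi> * (1 + norm \<xi>)^4 \<le> c0 * exp (- 2 * y) * (8 * (1 + 64 / \<beta>^2) * exp y)"
    unfolding pdf r_def[symmetric] using p c00 by (intro mult_left_mono) auto
  also have "\<dots> = c0 * (8 * (1 + 64 / \<beta>^2)) * (exp (- 2 * y) * exp y)" by (simp add: algebra_simps)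
  also have "exp (- 2 * y) * exp y = exp (- (\<beta>/4) * norm \<xi>^2)"
    by (simp add: exp_add[symmetric] y_def r_def)
  finally show ?thesis by (simp add: c0_def)
qed

lemma gauss_moment: fixes \<beta> :: real assumes b: "0 < \<beta>"
  shows "\<exists>M\<ge>0. (\<integral>\<^sup>+ \<xi>. ennreal (gauss_pdf \<beta> (\<xi>::real^'n) * (1 + norm \<xi>)^4) \<partial>lborel) \<le> ennreal M"
proof -
  define c1 where "c1 = (\<beta> / (2 * pi)) powr (real CARD('n) / 2) * (8 * (1 + 64 / \<beta>^2))"
  have c10: "0 \<le> c1" by (simp add: c1_def)
  define I where "I = (\<integral>\<^sup>+ x. ennreal (exp (- (\<beta>/4) * norm (x :: real^'n)^2)) \<partial>lborel)"
  have If: "I < \<infinity>" unfolding I_def using gauss_dim_finite[of "\<beta>/4"] b by simp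
  have "(\<integral>\<^sup>+ \<xi>. ennreal (gauss_pdf \<beta> (\<xi>::real^'n) * (1 + norm \<xi>)^4) \<partial>lborel)
      \<le> (\<integral>\<^sup>+ \<xi>. ennreal c1 * ennreal (exp (- (\<beta>/4) * norm (\<xi>::real^'n)^2)) \<partial>lborel)"
    by (intro nn_integral_mono) (use pdf_bound[OF b] c10 in \<open>auto simp: c1_def ennreal_mult[symmetric] intro!: ennreal_leI\<close>)
  also have "\<dots> = ennreal c1 * I" unfolding I_def by (rule nn_integral_cmult) simp
  also have "\<dots> = ennreal (c1 * enn2real I)" using If c10 by (simp add: ennreal_mult ennreal_enn2real_if)
  finally show ?thesis using c10 by (intro exI[of _ "c1 * enn2real I"]) auto
qed


lemma Ctot_nonneg: assumes K: "1 \<le> K" and b: "0 < \<beta>" shows "0 \<le> Ctot n K \<beta>"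
proof -
  have f1: "(1::real) \<le> fact n" by simp
  have k1: "1 \<le> K ^ n" using K by (simp add: one_le_power)
  have "1 * 1 \<le> fact n * K ^ n" using f1 k1 by (intro mult_mono) auto
  then have L0: "0 \<le> 2 * ln (fact n * K ^ n)" by simp
  have cld0: "0 \<le> cld n (2 * ln (fact n * K ^ n))" using L0 by (simp add: cld_def)
  have K0: "0 \<le> K" using K by simp
  have a: "0 \<le> CdetF n K" unfolding CdetF_def using cld0 K0 by (intro add_nonneg_nonneg mult_nonneg_nonneg; simp)+
  have c: "0 \<le> CetaF n K" unfolding CetaF_def using K0 by (intro add_nonneg_nonneg mult_nonneg_nonneg divide_nonneg_pos; simp)+
  have d: "0 \<le> CUF n K" unfolding CUF_def using K0 by (intro add_nonneg_nonneg mult_nonneg_nonneg; simp)+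
  show ?thesis unfolding Ctot_def using a c d b by simp
qed

theorem lemma8p1:
  fixes U :: "real^'n \<Rightarrow> real" and gU :: "real^'n \<Rightarrow> real^'n"
    and HU :: "real^'n \<Rightarrow> real^'n \<Rightarrow> real^'n"
    and \<beta> :: real
    and G :: "real \<Rightarrow> real^'n \<Rightarrow> real^'n" and DG :: "real \<Rightarrow> real^'n \<Rightarrow> real^'n \<Rightarrow> real^'n"
    and Bh :: "real \<Rightarrow> real^'n \<Rightarrow> real^'n^'n"
    and DB :: "real \<Rightarrow> real^'n \<Rightarrow> (real^'n) \<Rightarrow>\<^sub>L (real^'n^'n)"
    and D2B :: "real \<Rightarrow> real^'n \<Rightarrow> real^'n \<Rightarrow> ((real^'n) \<Rightarrow>\<^sub>L (real^'n^'n))"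
    and B :: "real^'n \<Rightarrow> real^'n^'n"
  assumes beta_pos: "\<beta> > 0"
    and U_deriv: "\<And>x. (U has_derivative (\<lambda>v. gU x \<bullet> v)) (at x)"
    and U_deriv2: "\<And>x. (gU has_derivative HU x) (at x)"
    and U_bdd: "\<exists>K. \<forall>x. norm (gU x) \<le> K \<and> onorm (HU x) \<le> K"
    and G_bdd: "\<exists>h0>0. \<exists>K. \<forall>h\<in>{0<..<h0}. \<forall>x.
        norm (G h x) \<le> K \<and> (G h has_derivative DG h x) (at x) \<and> onorm (DG h x) \<le> K"
    and B_bdd: "\<exists>h0>0. \<exists>K. \<forall>h\<in>{0<..<h0}. \<forall>x.
        invertible (Bh h x) \<and> norm (Bh h x) \<le> K \<and> norm (matrix_inv (Bh h x)) \<le> K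
      \<and> (Bh h has_derivative blinfun_apply (DB h x)) (at x) \<and> norm (DB h x) \<le> K
      \<and> (DB h has_derivative D2B h x) (at x) \<and> onorm (D2B h x) \<le> K"
    and B_rel: "\<exists>Cm :: real^'n \<Rightarrow> real^'n^'n. \<exists>DC. \<exists>K. \<exists>h0>0.
        (\<forall>x. norm (Cm x) \<le> K \<and> (Cm has_derivative DC x) (at x) \<and> onorm (DC x) \<le> K)
      \<and> (\<forall>h\<in>{0<..<h0}. \<forall>x. Bh h x ** transpose (Bh h x) = B x ** transpose (B x) + sqrt h *\<^sub>R Cm x)"
  shows "\<exists>C>0. \<exists>h0>0. \<forall>h\<in>{0<..<h0}. \<forall>X0.
    (\<integral>\<^sup>+ \<xi>. ennreal \<bar>alpha_h \<beta> U (G h) (Bh h) h X0 \<xi>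
        - alpha_tilde_h \<beta> gU (G h) (Bh h) (\<lambda>x. blinfun_apply (DB h x)) h X0 \<xi>\<bar> \<partial>gauss \<beta>)
      \<le> ennreal (C * h)"
proof -
  obtain KU where KU: "\<And>x. norm (gU x) \<le> KU" "\<And>x. onorm (HU x) \<le> KU" using U_bdd by blast
  obtain hG KG where hG: "hG > 0" and KG: "\<And>h x. h \<in> {0<..<hG} \<Longrightarrow>
        norm (G h x) \<le> KG \<and> (G h has_derivative DG h x) (at x) \<and> onorm (DG h x) \<le> KG"
    using G_bdd by blast
  obtain hB KB where hB: "hB > 0" and KB: "\<And>h x. h \<in> {0<..<hB} \<Longrightarrow>
        invertible (Bh h x) \<and> norm (Bh h x) \<le> KB \<and> norm (matrix_inv (Bh h x)) \<le> KB
      \<and> (Bh h has_derivative blinfun_apply (DB h x)) (at x) \<and> norm (DB h x) \<le> KB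
      \<and> (DB h has_derivative D2B h x) (at x) \<and> onorm (D2B h x) \<le> KB"
    using B_bdd by blast
  define K where "K = max 1 (max KU (max KG KB))"
  define h1 where "h1 = min 1 (min hG hB)"
  have K1: "1 \<le> K" by (auto simp: K_def le_max_iff_disj)
  have h1: "0 < h1" using hG hB by (simp add: h1_def)
  define C0 where "C0 = Ctot CARD('n) K \<beta>"
  have C00: "0 \<le> C0" unfolding C0_def by (rule Ctot_nonneg[OF K1 beta_pos])
  obtain M where M0: "0 \<le> M" and Mb: "(\<integral>\<^sup>+ \<xi>. ennreal (gauss_pdf \<beta> (\<xi>::real^'n) * (1 + norm \<xi>)^4) \<partial>lborel) \<le> ennreal M"
    using gauss_moment[OF beta_pos] by blast
  define C where "C = C0 * M + 1"
  have Cpos: "0 < C" using C00 M0 by (simp add: C_def add_nonneg_pos)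
  have mpdf: "(\<lambda>x. ennreal (gauss_pdf \<beta> (x::real^'n))) \<in> borel_measurable lborel"
    unfolding gauss_pdf_def by measurable
  have main: "(\<integral>\<^sup>+ \<xi>. ennreal \<bar>alpha_h \<beta> U (G h) (Bh h) h X0 \<xi>
        - alpha_tilde_h \<beta> gU (G h) (Bh h) (\<lambda>x. blinfun_apply (DB h x)) h X0 \<xi>\<bar> \<partial>gauss \<beta>)
      \<le> ennreal (C * h)" if h: "h \<in> {0<..<h1}" for h X0
  proof -
    have hpos: "0 < h" and hl1: "h < 1" and hhG: "h \<in> {0<..<hG}" and hhB: "h \<in> {0<..<hB}"
      using h by (auto simp: h1_def)
    interpret LS U gU HU \<beta> "G h" "DG h" "Bh h" "DB h" "D2B h" h K
    proof (unfold_locales)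
      fix x
      show "\<beta> > 0" by (rule beta_pos)
      show "0 < h" by (rule hpos)
      show "h < 1" by (rule hl1)
      show "1 \<le> K" by (rule K1)
      show "(U has_derivative (\<lambda>v. gU x \<bullet> v)) (at x)" by (rule U_deriv)
      show "(gU has_derivative HU x) (at x)" by (rule U_deriv2)
      show "norm (gU x) \<le> K" using KU(1)[of x] by (auto simp: K_def le_max_iff_disj)
      show "onorm (HU x) \<le> K" using KU(2)[of x] by (auto simp: K_def le_max_iff_disj)
      show "norm (G h x) \<le> K" using KG[OF hhG, of x] by (auto simp: K_def le_max_iff_disj)
      show "(G h has_derivative DG h x) (at x)" using KG[OF hhG, of x] by simp
      show "onorm (DG h x) \<le> K" using KG[OF hhG, of x] by (auto simp: K_def le_max_iff_disj)
      show "invertible (Bh h x)" using KB[OF hhB, of x] by simp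
      show "norm (Bh h x) \<le> K" using KB[OF hhB, of x] by (auto simp: K_def le_max_iff_disj)
      show "norm (matrix_inv (Bh h x)) \<le> K" using KB[OF hhB, of x] by (auto simp: K_def le_max_iff_disj)
      show "(Bh h has_derivative blinfun_apply (DB h x)) (at x)" using KB[OF hhB, of x] by simp
      show "norm (DB h x) \<le> K" using KB[OF hhB, of x] by (auto simp: K_def le_max_iff_disj)
      show "(DB h has_derivative D2B h x) (at x)" using KB[OF hhB, of x] by simp
      show "onorm (D2B h x) \<le> K" using KB[OF hhB, of x] by (auto simp: K_def le_max_iff_disj)
    qed
    have "(\<integral>\<^sup>+ \<xi>. ennreal \<bar>alpha_h \<beta> U (G h) (Bh h) h X0 \<xi>
        - alpha_tilde_h \<beta> gU (G h) (Bh h) (\<lambda>x. blinfun_apply (DB h x)) h X0 \<xi>\<bar> \<partial>gauss \<beta>)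
      \<le> (\<integral>\<^sup>+ (\<xi>::real^'n). ennreal (C0 * h * (1 + norm \<xi>)^4) \<partial>gauss \<beta>)"
    proof (rule nn_integral_mono)
      fix \<xi> :: "real^'n"
      show "ennreal \<bar>alpha_h \<beta> U (G h) (Bh h) h X0 \<xi>
        - alpha_tilde_h \<beta> gU (G h) (Bh h) (\<lambda>x. blinfun_apply (DB h x)) h X0 \<xi>\<bar> \<le> ennreal (C0 * h * (1 + norm \<xi>)^4)"
        using point_b[of X0 \<xi>] unfolding C0_def by (rule ennreal_leI)
    qed
    also have "\<dots> = (\<integral>\<^sup>+ (\<xi>::real^'n). ennreal (gauss_pdf \<beta> \<xi>) * ennreal (C0 * h * (1 + norm \<xi>)^4) \<partial>lborel)"
      unfolding gauss_def by (rule nn_integral_density[OF mpdf]) measurable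
    also have "\<dots> = (\<integral>\<^sup>+ (\<xi>::real^'n). ennreal (C0 * h) * ennreal (gauss_pdf \<beta> \<xi> * (1 + norm \<xi>)^4) \<partial>lborel)"
    proof (rule nn_integral_cong)
      fix \<xi> :: "real^'n"
      have p0: "0 \<le> gauss_pdf \<beta> \<xi>" by (simp add: gauss_pdf_def)
      have "ennreal (gauss_pdf \<beta> \<xi>) * ennreal (C0 * h * (1 + norm \<xi>)^4)
          = ennreal (gauss_pdf \<beta> \<xi> * (C0 * h * (1 + norm \<xi>)^4))"
        using p0 by (simp add: ennreal_mult')
      also have "\<dots> = ennreal ((C0 * h) * (gauss_pdf \<beta> \<xi> * (1 + norm \<xi>)^4))" by (simp add: mult_ac)
      also have "\<dots> = ennreal (C0 * h) * ennreal (gauss_pdf \<beta> \<xi> * (1 + norm \<xi>)^4)"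
        using C00 hpos by (simp add: ennreal_mult')
      finally show "ennreal (gauss_pdf \<beta> \<xi>) * ennreal (C0 * h * (1 + norm \<xi>)^4)
          = ennreal (C0 * h) * ennreal (gauss_pdf \<beta> \<xi> * (1 + norm \<xi>)^4)" .
    qed
    also have "\<dots> = ennreal (C0 * h) * (\<integral>\<^sup>+ (\<xi>::real^'n). ennreal (gauss_pdf \<beta> \<xi> * (1 + norm \<xi>)^4) \<partial>lborel)"
      by (rule nn_integral_cmult) (unfold gauss_pdf_def, measurable)
    also have "\<dots> \<le> ennreal (C0 * h) * ennreal M" by (rule mult_left_mono[OF Mb]) simp
    also have "\<dots> = ennreal (C0 * M * h)" using C00 hpos M0 by (simp add: ennreal_mult'[symmetric] mult_ac)
    also have "\<dots> \<le> ennreal (C * h)" using hpos by (intro ennreal_leI) (simp add: C_def algebra_simps)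
    finally show ?thesis .
  qed
  show ?thesis using Cpos h1 main by blast
qed


end
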